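(* Let $A\in\mathcal M_{dm}(\mathbb C)$ be positive semidefinite, written as a block matrix $A=(A_{ij})_{i,j=1}^m$ with $A_{ij}\in\mathcal M_d(\mathbb C)$. Let $P_i$ ($1\le i\le m$) be the orthogonal projection onto $\mathrm{span}\{e_k:(i-1)d<k\le id\}$ and $\mathcal C_{\mathcal P}(X)=\sum_{i=1}^mP_iXP_i$. Then: (1) there exist a unitary $U\in\mathcal M_{dm}(\mathbb C)$ and a positive semidefinite $D\in\mathcal M_d(\mathbb C)$ such that $\mathcal C_{\mathcal P}(U^*AU)=\frac1m\bigoplus_{i=1}^mD$; (2) with $U,D$ as in (1), there exist rectangular matrices $X_i\in\mathcal M_{dm,d}(\mathbb C)$, $X_i^*=(X_{1i}^*,\dots,X_{mi}^* )$ with $X_{ji}\in\mathcal M_d(\mathbb C)$, and unitaries $U_i\in\mathcal M_{dm}(\mathbb C)$, $1\le i\le m$, such that $$A=\frac1m\sum_{i=1}^mX_iX_i^*\quad\text{and}\quad U_i^*X_iX_i^*U_i=\bigoplus_{j=1}^m\delta_{ij}D,$$ and hence $\mathrm{Tr}_m(U_i^*X_iX_i^*U_i)=\mathrm{Tr}_m(U^*AU)$ for $1\le i\le m$.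
   Context: $\bigoplus_{i=1}^mD$ is the block diagonal matrix with $m$ diagonal blocks equal to $D$; $\bigoplus_{j=1}^m\delta_{ij}D$ is the block diagonal matrix with $D$ in the $i$-th diagonal block and zeros elsewhere. For $C=(C_{ij})_{i,j=1}^m\in\mathcal M_{dm}(\mathbb C)$ with $C_{ij}\in\mathcal M_d(\mathbb C)$, the partial trace is $\mathrm{Tr}_m(C)=\sum_{i=1}^mC_{ii}\in\mathcal M_d(\mathbb C)$. *)

theory Defs
  imports Complex_Main "Jordan_Normal_Form.Matrix"
begin

definition cadj :: "complex mat \<Rightarrow> complex mat" where
  "cadj A = mat (dim_col A) (dim_row A) (\<lambda>(i,j). cnj (A $$ (j,i)))"

definition unitary_mat :: "nat \<Rightarrow> complex mat \<Rightarrow> bool" where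
  "unitary_mat n U \<longleftrightarrow> U \<in> carrier_mat n n \<and> cadj U * U = 1\<^sub>m n \<and> U * cadj U = 1\<^sub>m n"

definition psd_mat :: "nat \<Rightarrow> complex mat \<Rightarrow> bool" where
  "psd_mat n A \<longleftrightarrow> A \<in> carrier_mat n n \<and> cadj A = A \<and>
     (\<forall>v \<in> carrier_vec n. Im (conjugate v \<bullet> (A *\<^sub>v v)) = 0 \<and> Re (conjugate v \<bullet> (A *\<^sub>v v)) \<ge> 0)"

definition msum :: "nat \<Rightarrow> nat \<Rightarrow> (nat \<Rightarrow> complex mat) \<Rightarrow> nat \<Rightarrow> complex mat" where
  "msum r c f m = foldr (\<lambda>i acc. f i + acc) [0..<m] (0\<^sub>m r c)"

(* P_i (0-based i): orthogonal projection onto span{e_k : i*d \<le> k < (i+1)*d} in C^{dm} *)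
definition blockproj :: "nat \<Rightarrow> nat \<Rightarrow> nat \<Rightarrow> complex mat" where
  "blockproj d m i = mat (d*m) (d*m) (\<lambda>(k,l). if k = l \<and> i*d \<le> k \<and> k < (i+1)*d then 1 else 0)"

definition pinching :: "nat \<Rightarrow> nat \<Rightarrow> complex mat \<Rightarrow> complex mat" where
  "pinching d m X = msum (d*m) (d*m) (\<lambda>i. blockproj d m i * X * blockproj d m i) m"

definition blockdiag :: "nat \<Rightarrow> nat \<Rightarrow> (nat \<Rightarrow> complex mat) \<Rightarrow> complex mat" where
  "blockdiag d m B = mat (d*m) (d*m)
     (\<lambda>(k,l). if k div d = l div d then B (k div d) $$ (k mod d, l mod d) else 0)"

definition blk :: "nat \<Rightarrow> complex mat \<Rightarrow> nat \<Rightarrow> nat \<Rightarrow> complex mat" where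
  "blk d C i j = mat d d (\<lambda>(k,l). C $$ (i*d + k, j*d + l))"

definition ptrace :: "nat \<Rightarrow> nat \<Rightarrow> complex mat \<Rightarrow> complex mat" where
  "ptrace d m C = msum d d (\<lambda>i. blk d C i i) m"

end

theory Submission
  imports Defs "Jordan_Normal_Form.Spectral_Radius"
begin


lemma cadj_carrier[simp]: "cadj A \<in> carrier_mat (dim_col A) (dim_row A)"
  unfolding cadj_def by auto
lemma cadj_carrier2: "A \<in> carrier_mat r c \<Longrightarrow> cadj A \<in> carrier_mat c r"
  unfolding cadj_def carrier_mat_def by auto
lemma cadj_dims[simp]: "dim_row (cadj A) = dim_col A" "dim_col (cadj A) = dim_row A"
  unfolding cadj_def by auto
lemma cadj_index[simp]: "i < dim_col A \<Longrightarrow> j < dim_row A \<Longrightarrow> cadj A $$ (i,j) = cnj (A $$ (j,i))"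
  unfolding cadj_def by auto

lemma mult_index: "i < dim_row A \<Longrightarrow> j < dim_col B \<Longrightarrow> dim_col A = dim_row B \<Longrightarrow>
  (A * B) $$ (i,j) = (\<Sum>k<dim_col A. A $$ (i,k) * B $$ (k,j))"
  by (auto simp: scalar_prod_def lessThan_atLeast0 intro!: sum.cong)
lemmas [simp del] = index_mult_mat(1)

lemma mat_eqI: "A \<in> carrier_mat r c \<Longrightarrow> B \<in> carrier_mat r c \<Longrightarrow> (\<And>i j. i<r \<Longrightarrow> j<c \<Longrightarrow> A$$(i,j) = B$$(i,j)) \<Longrightarrow> A = B"
  by (rule eq_matI) auto

lemma cadj_mult: assumes A: "A \<in> carrier_mat r p" and B: "B \<in> carrier_mat p c"
  shows "cadj (A * B) = cadj B * cadj A"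
proof (rule mat_eqI[of _ c r])
  fix i j assume ij: "i < c" "j < r"
  from A B have d: "dim_row A = r" "dim_col A = p" "dim_row B = p" "dim_col B = c" by auto
  have "cadj (A * B) $$ (i,j) = cnj (\<Sum>k<p. A $$ (j,k) * B $$ (k,i))"
    using d ij by (simp add: mult_index)
  also have "\<dots> = (\<Sum>k<p. cnj (B $$ (k,i)) * cnj (A $$ (j,k)))"
    by (simp add: mult.commute)
  also have "\<dots> = (cadj B * cadj A) $$ (i,j)"
    using d ij by (simp add: mult_index)
  finally show "cadj (A * B) $$ (i,j) = (cadj B * cadj A) $$ (i,j)" .
next
  show "cadj (A * B) \<in> carrier_mat c r" using mult_carrier_mat[OF A B] by (rule cadj_carrier2)
  show "cadj B * cadj A \<in> carrier_mat c r" by (rule mult_carrier_mat[OF cadj_carrier2[OF B] cadj_carrier2[OF A]])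
qed

lemma cadj_cadj[simp]: "cadj (cadj A) = A"
  by (rule eq_matI) auto

lemma cadj_one[simp]: "cadj (1\<^sub>m n) = 1\<^sub>m n"
  by (rule eq_matI) auto

lemma cadj_smult: "cadj (a \<cdot>\<^sub>m A) = cnj a \<cdot>\<^sub>m cadj A"
  by (rule eq_matI) auto

lemma cadj_add: assumes A: "A \<in> carrier_mat r c" and B: "B \<in> carrier_mat r c" shows "cadj (A + B) = cadj A + cadj B"
  using carrier_matD[OF A] carrier_matD[OF B] by (intro eq_matI) simp_all

definition ortho :: "nat \<Rightarrow> (nat \<Rightarrow> nat \<Rightarrow> complex) \<Rightarrow> nat set \<Rightarrow> bool" where
  "ortho n g K \<longleftrightarrow> (\<forall>j\<in>K. \<forall>k\<in>K. (\<Sum>l<n. cnj (g j l) * g k l) = (if j = k then 1 else 0))"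

lemma unitary_from_left: "U \<in> carrier_mat n n \<Longrightarrow> cadj U * U = 1\<^sub>m n \<Longrightarrow> unitary_mat n U"
  proof -
  assume U: "U \<in> carrier_mat n n" and L: "cadj U * U = 1\<^sub>m n"
  have "U * cadj U = 1\<^sub>m n" by (rule mat_mult_left_right_inverse[OF cadj_carrier2[OF U] U L])
  with U L show ?thesis unfolding unitary_mat_def by blast
qed

lemma ortho_unitary: assumes "ortho n g {..<n}"
  shows "unitary_mat n (mat n n (\<lambda>(l,k). g k l))"
proof (rule unitary_from_left)
  let ?Q = "mat n n (\<lambda>(l,k). g k l)"
  have Q: "?Q \<in> carrier_mat n n" by simp
  then show "?Q \<in> carrier_mat n n" .
  show "cadj ?Q * ?Q = 1\<^sub>m n"
  proof (rule mat_eqI[of _ n n])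
    fix i j assume ij: "i < n" "j < n"
    have "(cadj ?Q * ?Q) $$ (i,j) = (\<Sum>l<n. cnj (g i l) * g j l)"
      using ij by (simp add: mult_index)
    also have "\<dots> = (if i = j then 1 else 0)" using assms ij unfolding ortho_def by blast
    also have "\<dots> = 1\<^sub>m n $$ (i,j)" using ij by simp
    finally show "(cadj ?Q * ?Q) $$ (i,j) = 1\<^sub>m n $$ (i,j)" .
  next
    show "cadj ?Q * ?Q \<in> carrier_mat n n" by (rule mult_carrier_mat[OF cadj_carrier2[OF Q] Q])
    show "1\<^sub>m n \<in> carrier_mat n n" by simp
  qed
qed

lemma cnj_mult_self: "cnj z * z = complex_of_real ((cmod z)\<^sup>2)"
  using complex_norm_square[of z] by (simp add: mult.commute)

lemma cnj_mult_self_div: assumes "r > 0"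
  shows "cnj (z / complex_of_real (sqrt r)) * (z / complex_of_real (sqrt r)) = complex_of_real ((cmod z)\<^sup>2 / r)"
proof -
  have "cnj (z / complex_of_real (sqrt r)) * (z / complex_of_real (sqrt r))
      = (cnj z * z) / (complex_of_real (sqrt r) * complex_of_real (sqrt r))" by simp
  also have "complex_of_real (sqrt r) * complex_of_real (sqrt r) = complex_of_real r"
    using assms by (simp flip: of_real_mult)
  finally show ?thesis by (simp add: cnj_mult_self)
qed

lemma orth_vec_exists:
  assumes K: "K \<subseteq> {..<n}" and cK: "card K < n" and o: "ortho n g K"
  shows "\<exists>h. (\<Sum>l<n. cnj (h l) * h l) = 1 \<and> (\<forall>k\<in>K. (\<Sum>l<n. cnj (g k l) * h l) = 0)"
proof -
  have fK: "finite K" using K finite_subset by blast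
  define s where "s l0 = 1 - (\<Sum>k\<in>K. cnj (g k l0) * g k l0)" for l0
  have "(\<Sum>l0<n. s l0) = of_nat n - (\<Sum>k\<in>K. \<Sum>l0<n. cnj (g k l0) * g k l0)"
    unfolding s_def by (simp add: sum_subtractf sum.swap[of _ K])
  also have "(\<Sum>k\<in>K. \<Sum>l0<n. cnj (g k l0) * g k l0) = (\<Sum>k\<in>K. 1)"
    using o unfolding ortho_def by (intro sum.cong) auto
  finally have "(\<Sum>l0<n. s l0) = of_nat n - of_nat (card K)" by simp
  also have "\<dots> \<noteq> 0" using cK by simp
  finally obtain l0 where l0: "l0 < n" "s l0 \<noteq> 0"
    by (metis (no_types, lifting) lessThan_iff sum.neutral)
  define p where "p l = (if l = l0 then 1 else 0) - (\<Sum>k\<in>K. cnj (g k l0) * g k l)" for l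
  have pl0: "p l0 \<noteq> 0" using l0 unfolding p_def s_def by simp
  have orth: "(\<Sum>l<n. cnj (g j l) * p l) = 0" if j: "j \<in> K" for j
  proof -
    have "(\<Sum>l<n. cnj (g j l) * p l) = (\<Sum>l<n. cnj (g j l) * (if l = l0 then 1 else 0))
        - (\<Sum>l<n. \<Sum>k\<in>K. cnj (g k l0) * (cnj (g j l) * g k l))"
      unfolding p_def by (simp add: right_diff_distrib sum_subtractf sum_distrib_left mult.assoc mult.left_commute)
    also have "(\<Sum>l<n. cnj (g j l) * (if l = l0 then 1 else 0)) = cnj (g j l0)"
      using l0 by (simp add: if_distrib cong: if_cong)
    also have "(\<Sum>l<n. \<Sum>k\<in>K. cnj (g k l0) * (cnj (g j l) * g k l))
        = (\<Sum>k\<in>K. cnj (g k l0) * (\<Sum>l<n. cnj (g j l) * g k l))"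
      by (simp add: sum.swap[of _ K] sum_distrib_left)
    also have "\<dots> = (\<Sum>k\<in>K. cnj (g k l0) * (if j = k then 1 else 0))"
      using o j unfolding ortho_def by (intro sum.cong) auto
    also have "\<dots> = cnj (g j l0)" using fK j by (simp add: if_distrib cong: if_cong)
    finally show ?thesis by simp
  qed
  define r where "r = (\<Sum>l<n. (cmod (p l))\<^sup>2)"
  have "(cmod (p l0))\<^sup>2 \<le> r" unfolding r_def
    using l0 by (intro member_le_sum) auto
  moreover have "(cmod (p l0))\<^sup>2 > 0" using pl0 by simp
  ultimately have r0: "r > 0" by linarith
  define h where "h l = p l / complex_of_real (sqrt r)" for l
  have "(\<Sum>l<n. cnj (h l) * h l) = (\<Sum>l<n. complex_of_real ((cmod (p l))\<^sup>2 / r))"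
    unfolding h_def using r0
    by (intro sum.cong refl cnj_mult_self_div)
  also have "\<dots> = complex_of_real (r / r)" unfolding r_def by (simp only: of_real_sum[symmetric] sum_divide_distrib[symmetric])
  also have "\<dots> = 1" using r0 by simp
  finally have n1: "(\<Sum>l<n. cnj (h l) * h l) = 1" .
  have "\<forall>k\<in>K. (\<Sum>l<n. cnj (g k l) * h l) = 0"
  proof
    fix k assume "k \<in> K"
    have "(\<Sum>l<n. cnj (g k l) * h l) = (\<Sum>l<n. cnj (g k l) * p l) / complex_of_real (sqrt r)"
      unfolding h_def by (simp add: sum_divide_distrib)
    with orth[OF \<open>k \<in> K\<close>] show "(\<Sum>l<n. cnj (g k l) * h l) = 0" by simp
  qed
  with n1 show ?thesis by blast
qed

lemma ortho_insert:
  assumes o: "ortho n g K" and j: "j \<notin> K"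
    and h1: "(\<Sum>l<n. cnj (h l) * h l) = 1" and h2: "\<forall>k\<in>K. (\<Sum>l<n. cnj (g k l) * h l) = 0"
  shows "ortho n (g(j := h)) (insert j K)"
  unfolding ortho_def
proof (intro ballI)
  fix a b assume a: "a \<in> insert j K" and b: "b \<in> insert j K"
  have h3: "(\<Sum>l<n. cnj (h l) * g k l) = 0" if "k \<in> K" for k
  proof -
    have "(\<Sum>l<n. cnj (h l) * g k l) = cnj (\<Sum>l<n. cnj (g k l) * h l)"
      by (simp add: mult.commute)
    with h2 that show ?thesis by simp
  qed
  show "(\<Sum>l<n. cnj ((g(j := h)) a l) * (g(j := h)) b l) = (if a = b then 1 else 0)"
  proof (cases "a = j")
    case True
    show ?thesis
    proof (cases "b = j")
      case True
      with \<open>a = j\<close> h1 show ?thesis by simp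
    next
      case False
      with b have "b \<in> K" by simp
      with \<open>a = j\<close> False h3 show ?thesis by simp
    qed
  next
    case False
    with a have aK: "a \<in> K" by simp
    with j have aj: "a \<noteq> j" by auto
    show ?thesis
    proof (cases "b = j")
      case True
      with aK aj h2 show ?thesis by simp
    next
      case False
      with b have "b \<in> K" by simp
      with aK aj False o show ?thesis unfolding ortho_def by simp
    qed
  qed
qed

lemma ortho_complete:
  assumes "K \<subseteq> {..<n}" "ortho n g K"
  shows "\<exists>g'. ortho n g' {..<n} \<and> (\<forall>k\<in>K. g' k = g k)"
  using assms
proof (induction "n - card K" arbitrary: K g rule: less_induct)
  case less
  have fK: "finite K" using less.prems finite_subset by blast
  have cle: "card K \<le> n" using card_mono[OF _ less.prems(1)] by simp
  show ?case
  proof (cases "card K = n")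
    case True
    then have "K = {..<n}" using card_subset_eq[OF _ less.prems(1)] by simp
    then show ?thesis using less.prems by blast
  next
    case False
    with cle have cK: "card K < n" by simp
    obtain h where h: "(\<Sum>l<n. cnj (h l) * h l) = 1" "\<forall>k\<in>K. (\<Sum>l<n. cnj (g k l) * h l) = 0"
      using orth_vec_exists[OF less.prems(1) cK less.prems(2)] by blast
    have "\<not> {..<n} \<subseteq> K"
    proof
      assume "{..<n} \<subseteq> K"
      then have "card {..<n} \<le> card K" by (rule card_mono[OF fK])
      with cK show False by simp
    qed
    then obtain j where j: "j < n" "j \<notin> K" by auto
    have o2: "ortho n (g(j := h)) (insert j K)" by (rule ortho_insert[OF less.prems(2) j(2) h])
    have sub: "insert j K \<subseteq> {..<n}" using j less.prems(1) by auto
    have "n - card (insert j K) < n - card K" using j fK cK by simp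
    from less.hyps[OF this sub o2] obtain g' where
      g': "ortho n g' {..<n}" "\<forall>k\<in>insert j K. g' k = (g(j := h)) k" by blast
    have "\<forall>k\<in>K. g' k = g k" using g'(2) j(2) by auto
    with g'(1) show ?thesis by blast
  qed
qed

lemma ortho_rows:
  assumes o: "ortho n g {..<n}" and i: "i < n" and l: "l < n"
  shows "(\<Sum>c<n. g c i * cnj (g c l)) = (if i = l then 1 else 0)"
proof -
  let ?Q = "mat n n (\<lambda>(l,k). g k l)"
  have Q: "?Q \<in> carrier_mat n n" by simp
  have "?Q * cadj ?Q = 1\<^sub>m n" using ortho_unitary[OF o] unfolding unitary_mat_def by blast
  then have "(?Q * cadj ?Q) $$ (i,l) = 1\<^sub>m n $$ (i,l)" by simp
  moreover have "(?Q * cadj ?Q) $$ (i,l) = (\<Sum>c<n. g c i * cnj (g c l))"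
    using i l by (simp add: mult_index)
  ultimately show ?thesis using i l by simp
qed

lemma ortho_expand:
  assumes o: "ortho n g {..<n}" and i: "i < n"
  shows "(\<Sum>c<n. (\<Sum>l<n. cnj (g c l) * v l) * g c i) = v i"
proof -
  have "(\<Sum>c<n. (\<Sum>l<n. cnj (g c l) * v l) * g c i) = (\<Sum>l<n. v l * (\<Sum>c<n. g c i * cnj (g c l)))"
  proof -
    have "(\<Sum>c<n. (\<Sum>l<n. cnj (g c l) * v l) * g c i) = (\<Sum>c<n. \<Sum>l<n. v l * (g c i * cnj (g c l)))"
      by (intro sum.cong refl) (simp add: sum_distrib_right sum_distrib_left mult_ac)
    also have "\<dots> = (\<Sum>l<n. \<Sum>c<n. v l * (g c i * cnj (g c l)))" by (rule sum.swap)
    also have "\<dots> = (\<Sum>l<n. v l * (\<Sum>c<n. g c i * cnj (g c l)))" by (simp add: sum_distrib_left)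
    finally show ?thesis .
  qed
  also have "\<dots> = (\<Sum>l<n. v l * (if i = l then 1 else 0))"
    using o i by (intro sum.cong refl) (simp add: ortho_rows)
  also have "\<dots> = v i" using i by (simp add: if_distrib cong: if_cong)
  finally show ?thesis .
qed

lemma normalize_vec:
  fixes x :: "nat \<Rightarrow> complex"
  assumes "x l0 \<noteq> 0" "l0 < n"
  shows "\<exists>c::complex. (\<Sum>l<n. cnj (c * x l) * (c * x l)) = 1"
proof -
  define r where "r = (\<Sum>l<n. (cmod (x l))\<^sup>2)"
  have "(cmod (x l0))\<^sup>2 \<le> r" unfolding r_def
    using assms by (intro member_le_sum) simp_all
  moreover have "(cmod (x l0))\<^sup>2 > 0" using assms by simp
  ultimately have r0: "r > 0" by linarith
  define c where "c = 1 / complex_of_real (sqrt r)"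
  have "(\<Sum>l<n. cnj (c * x l) * (c * x l)) = (\<Sum>l<n. complex_of_real ((cmod (x l))\<^sup>2 / r))"
    unfolding c_def using r0 cnj_mult_self_div[OF r0]
    by (intro sum.cong refl) simp
  also have "\<dots> = complex_of_real (r / r)" unfolding r_def by (simp only: of_real_sum[symmetric] sum_divide_distrib[symmetric] finite_lessThan)
  also have "\<dots> = 1" using r0 by simp
  finally show ?thesis by blast
qed

lemma sum_split_at:
  fixes f :: "nat \<Rightarrow> 'a::comm_monoid_add"
  assumes "k \<le> n"
  shows "(\<Sum>c<n. f c) = (\<Sum>c<k. f c) + (\<Sum>a<n-k. f (k+a))"
proof -
  have "(\<Sum>c<n. f c) = sum f {0..<k} + sum f {k..<n}"
    using assms by (simp add: lessThan_atLeast0 sum.atLeastLessThan_concat)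
  also have "sum f {k..<n} = sum f {0+k..<(n-k)+k}" using assms by simp
  also have "\<dots> = (\<Sum>a\<in>{0..<n-k}. f (a+k))" by (rule sum.shift_bounds_nat_ivl)
  finally show ?thesis by (simp add: lessThan_atLeast0 add.commute)
qed

lemma mulv_index: "B \<in> carrier_mat N N \<Longrightarrow> y \<in> carrier_vec N \<Longrightarrow> a < N \<Longrightarrow>
   (B *\<^sub>v y) $ a = (\<Sum>b<N. B $$ (a,b) * y $ b)"
  by (simp add: scalar_prod_def lessThan_atLeast0)

lemma herm_eigen_family:
  assumes A: "A \<in> carrier_mat n n" and H: "cadj A = A"
  shows "k \<le> n \<Longrightarrow> \<exists>g lam. ortho n g {..<k} \<and> (\<forall>j<k. \<forall>i<n. (\<Sum>l<n. A$$(i,l) * g j l) = lam j * g j i)"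
proof (induction k)
  case 0
  show ?case by (simp add: ortho_def)
next
  case (Suc k)
  then have kn: "k < n" by simp
  from Suc obtain g lam where o: "ortho n g {..<k}"
    and ev: "\<forall>j<k. \<forall>i<n. (\<Sum>l<n. A$$(i,l) * g j l) = lam j * g j i" by auto
  obtain g' where o': "ortho n g' {..<n}" and gg: "\<forall>j\<in>{..<k}. g' j = g j"
    using ortho_complete[of "{..<k}" n g] o kn by auto
  have og: "(\<Sum>l<n. cnj (g' a l) * g' b l) = (if a = b then 1 else 0)" if "a < n" "b < n" for a b
    using o' that unfolding ortho_def by auto
  have Ah: "cnj (A$$(l,l')) = A$$(l',l)" if "l < n" "l' < n" for l l'
  proof -
    have "cadj A $$ (l',l) = cnj (A$$(l,l'))" using A that by simp
    then show ?thesis using H by simp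
  qed
  define N where "N = n - k"
  have N0: "N > 0" using kn unfolding N_def by simp
  define B where "B = mat N N (\<lambda>(a,b). \<Sum>l<n. cnj (g' (k+a) l) * (\<Sum>l'<n. A$$(l,l') * g' (k+b) l'))"
  have Bc: "B \<in> carrier_mat N N" unfolding B_def by simp
  obtain mu where "mu \<in> spectrum B" using spectrum_non_empty[OF Bc N0] by blast
  then obtain y where y: "y \<in> carrier_vec N" "y \<noteq> 0\<^sub>v N" "B *\<^sub>v y = mu \<cdot>\<^sub>v y"
    unfolding spectrum_def eigenvalue_def eigenvector_def using Bc by auto
  have yeq: "(\<Sum>b<N. B$$(a,b) * y$b) = mu * y$a" if "a < N" for a
  proof -
    have "(B *\<^sub>v y) $ a = (mu \<cdot>\<^sub>v y) $ a" using y(3) by simp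
    then show ?thesis using mulv_index[OF Bc y(1) that] that y(1) by simp
  qed
  obtain a0 where a0: "a0 < N" "y $ a0 \<noteq> 0"
    using y(1,2) by (metis carrier_vecD index_zero_vec(1) eq_vecI index_zero_vec(2))
  define x where "x l = (\<Sum>a<N. y$a * g' (k+a) l)" for l
  have coef: "(\<Sum>l<n. cnj (g' c l) * x l) = (\<Sum>a<N. y$a * (if c = k+a then 1 else 0))" if c: "c < n" for c
  proof -
    have "(\<Sum>l<n. cnj (g' c l) * x l) = (\<Sum>l<n. \<Sum>a<N. y$a * (cnj (g' c l) * g' (k+a) l))"
      unfolding x_def by (simp add: sum_distrib_left mult_ac)
    also have "\<dots> = (\<Sum>a<N. \<Sum>l<n. y$a * (cnj (g' c l) * g' (k+a) l))" by (rule sum.swap)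
    also have "\<dots> = (\<Sum>a<N. y$a * (\<Sum>l<n. cnj (g' c l) * g' (k+a) l))" by (simp add: sum_distrib_left)
    also have "\<dots> = (\<Sum>a<N. y$a * (if c = k+a then 1 else 0))"
      using c by (intro sum.cong refl) (simp add: og N_def)
    finally show ?thesis .
  qed
  have xorth: "\<forall>c\<in>{..<k}. (\<Sum>l<n. cnj (g c l) * x l) = 0"
  proof
    fix c assume "c \<in> {..<k}"
    then have "c < n" "c < k" using kn by auto
    then show "(\<Sum>l<n. cnj (g c l) * x l) = 0" using coef[of c] gg by simp
  qed
  have "(\<Sum>l<n. cnj (g' (k+a0) l) * x l) = y $ a0"
    using coef[of "k+a0"] a0 unfolding N_def by (simp add: if_distrib cong: if_cong)
  then obtain l0 where l0: "l0 < n" "x l0 \<noteq> 0" using a0(2)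
    by (metis (no_types, lifting) lessThan_iff mult_zero_right sum.neutral)
  have Agb: "(\<Sum>l<n. A$$(i,l) * g' (k+b) l) = (\<Sum>a<N. B$$(a,b) * g' (k+a) i)" if b: "b < N" and i: "i < n" for b i
  proof -
    define v where "v l = (\<Sum>l'<n. A$$(l,l') * g' (k+b) l')" for l
    have c0: "(\<Sum>l<n. cnj (g' c l) * v l) = 0" if c: "c < k" for c
    proof -
      have "(\<Sum>l<n. cnj (g' c l) * v l) = (\<Sum>l<n. \<Sum>l'<n. cnj (g c l) * A$$(l,l') * g' (k+b) l')"
        unfolding v_def using gg c by (simp add: sum_distrib_left mult_ac)
      also have "\<dots> = (\<Sum>l'<n. \<Sum>l<n. cnj (g c l) * A$$(l,l') * g' (k+b) l')" by (rule sum.swap)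
      also have "\<dots> = (\<Sum>l'<n. (\<Sum>l<n. cnj (g c l) * A$$(l,l')) * g' (k+b) l')"
        by (intro sum.cong refl) (simp add: sum_distrib_right)
      also have "\<dots> = (\<Sum>l'<n. cnj (\<Sum>l<n. A$$(l',l) * g c l) * g' (k+b) l')"
      proof (intro sum.cong refl arg_cong2[where f="(*)"])
        fix l' assume l': "l' \<in> {..<n}"
        have "cnj (\<Sum>l<n. A$$(l',l) * g c l) = (\<Sum>l<n. cnj (A$$(l',l)) * cnj (g c l))" by simp
        also have "\<dots> = (\<Sum>l<n. cnj (g c l) * A$$(l,l'))"
          using l' by (intro sum.cong refl) (simp add: Ah mult.commute)
        finally show "(\<Sum>l<n. cnj (g c l) * A$$(l,l')) = cnj (\<Sum>l<n. A$$(l',l) * g c l)" by simp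
      qed
      also have "\<dots> = (\<Sum>l'<n. cnj (lam c) * (cnj (g' c l') * g' (k+b) l'))"
        using ev c gg by (intro sum.cong refl) (simp add: mult_ac)
      also have "\<dots> = cnj (lam c) * (\<Sum>l'<n. cnj (g' c l') * g' (k+b) l')" by (simp add: sum_distrib_left)
      also have "\<dots> = 0" using c b kn by (simp add: og N_def)
      finally show ?thesis .
    qed
    have "v i = (\<Sum>c<n. (\<Sum>l<n. cnj (g' c l) * v l) * g' c i)"
      using ortho_expand[OF o' i, of v] by simp
    also have "\<dots> = (\<Sum>c<k. (\<Sum>l<n. cnj (g' c l) * v l) * g' c i)
         + (\<Sum>a<N. (\<Sum>l<n. cnj (g' (k+a) l) * v l) * g' (k+a) i)"
      unfolding N_def by (rule sum_split_at) (use kn in simp)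
    also have "(\<Sum>c<k. (\<Sum>l<n. cnj (g' c l) * v l) * g' c i) = 0"
      using c0 by simp
    also have "(\<Sum>a<N. (\<Sum>l<n. cnj (g' (k+a) l) * v l) * g' (k+a) i) = (\<Sum>a<N. B$$(a,b) * g' (k+a) i)"
      using b unfolding B_def v_def by (intro sum.cong refl) simp
    finally show ?thesis unfolding v_def by simp
  qed
  have Ax: "(\<Sum>l<n. A$$(i,l) * x l) = mu * x i" if i: "i < n" for i
  proof -
    have "(\<Sum>l<n. A$$(i,l) * x l) = (\<Sum>l<n. \<Sum>b<N. y$b * (A$$(i,l) * g' (k+b) l))"
      unfolding x_def by (simp add: sum_distrib_left mult_ac)
    also have "\<dots> = (\<Sum>b<N. \<Sum>l<n. y$b * (A$$(i,l) * g' (k+b) l))" by (rule sum.swap)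
    also have "\<dots> = (\<Sum>b<N. y$b * (\<Sum>a<N. B$$(a,b) * g' (k+a) i))"
      using i by (intro sum.cong refl) (simp add: sum_distrib_left[symmetric] Agb)
    also have "\<dots> = (\<Sum>b<N. \<Sum>a<N. g' (k+a) i * (B$$(a,b) * y$b))"
      by (simp add: sum_distrib_left mult_ac)
    also have "\<dots> = (\<Sum>a<N. \<Sum>b<N. g' (k+a) i * (B$$(a,b) * y$b))" by (rule sum.swap)
    also have "\<dots> = (\<Sum>a<N. g' (k+a) i * (mu * y$a))"
      by (intro sum.cong refl) (simp add: sum_distrib_left[symmetric] yeq)
    also have "\<dots> = mu * x i" unfolding x_def by (simp add: sum_distrib_left mult_ac)
    finally show ?thesis .
  qed
  obtain cc where cc: "(\<Sum>l<n. cnj (cc * x l) * (cc * x l)) = 1"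
    using normalize_vec[of x l0 n] l0 by blast
  define h where "h l = cc * x l" for l
  have h1: "(\<Sum>l<n. cnj (h l) * h l) = 1" using cc unfolding h_def .
  have h2: "\<forall>c\<in>{..<k}. (\<Sum>l<n. cnj (g c l) * h l) = 0"
  proof
    fix c assume "c \<in> {..<k}"
    then have "(\<Sum>l<n. cnj (g c l) * h l) = cc * (\<Sum>l<n. cnj (g c l) * x l)"
      unfolding h_def by (simp add: sum_distrib_left mult_ac)
    with xorth \<open>c \<in> {..<k}\<close> show "(\<Sum>l<n. cnj (g c l) * h l) = 0" by simp
  qed
  have o2: "ortho n (g(k := h)) {..<Suc k}"
    using ortho_insert[OF o _ h1 h2] by (simp add: lessThan_Suc)
  have ev2: "\<forall>j<Suc k. \<forall>i<n. (\<Sum>l<n. A$$(i,l) * (g(k := h)) j l) = (lam(k := mu)) j * (g(k := h)) j i"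
  proof (intro allI impI)
    fix j i assume j: "j < Suc k" and i: "i < n"
    show "(\<Sum>l<n. A$$(i,l) * (g(k := h)) j l) = (lam(k := mu)) j * (g(k := h)) j i"
    proof (cases "j = k")
      case True
      have "(\<Sum>l<n. A$$(i,l) * h l) = cc * (\<Sum>l<n. A$$(i,l) * x l)"
        unfolding h_def by (simp add: sum_distrib_left mult_ac)
      also have "\<dots> = mu * h i" using Ax[OF i] unfolding h_def by simp
      finally show ?thesis using True by simp
    next
      case False
      with j have "j < k" by simp
      with ev i False show ?thesis by simp
    qed
  qed
  from o2 ev2 show ?case by blast
qed

definition diagm :: "nat \<Rightarrow> (nat \<Rightarrow> complex) \<Rightarrow> complex mat" where
  "diagm n f = mat n n (\<lambda>(i,j). if i = j then f i else 0)"

lemma diagm_carrier[simp]: "diagm n f \<in> carrier_mat n n"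
  unfolding diagm_def by simp
lemma diagm_dims[simp]: "dim_row (diagm n f) = n" "dim_col (diagm n f) = n"
  unfolding diagm_def by simp_all
lemma diagm_index[simp]: "i < n \<Longrightarrow> j < n \<Longrightarrow> diagm n f $$ (i,j) = (if i = j then f i else 0)"
  unfolding diagm_def by simp

lemma diag_conj_index:
  assumes W: "W \<in> carrier_mat n n" and i: "i < n" and j: "j < n"
  shows "(W * diagm n f * cadj W) $$ (i,j) = (\<Sum>k<n. W$$(i,k) * f k * cnj (W$$(j,k)))"
proof -
  have d: "dim_row W = n" "dim_col W = n" using W by auto
  have WD: "(W * diagm n f) $$ (i,k) = W$$(i,k) * f k" if "k < n" for k
  proof -
    have "(W * diagm n f) $$ (i,k) = (\<Sum>p<n. W$$(i,p) * (if p = k then f p else 0))"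
      using d i that by (simp add: mult_index)
    also have "\<dots> = W$$(i,k) * f k" using that by (simp add: if_distrib cong: if_cong)
    finally show ?thesis .
  qed
  have "(W * diagm n f * cadj W) $$ (i,j) = (\<Sum>k<n. (W * diagm n f) $$ (i,k) * cadj W $$ (k,j))"
    using d i j by (simp add: mult_index)
  also have "\<dots> = (\<Sum>k<n. W$$(i,k) * f k * cnj (W$$(j,k)))"
    using d j by (intro sum.cong refl) (simp add: WD)
  finally show ?thesis .
qed

lemma spectral_psd:
  assumes P: "psd_mat n A"
  shows "\<exists>W lam. unitary_mat n W \<and> (\<forall>k<n. lam k \<ge> (0::real)) \<and>
           A = W * diagm n (\<lambda>k. complex_of_real (lam k)) * cadj W"
proof -
  have A: "A \<in> carrier_mat n n" and H: "cadj A = A" using P unfolding psd_mat_def by auto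
  obtain g lm where o: "ortho n g {..<n}"
    and ev: "\<forall>j<n. \<forall>i<n. (\<Sum>l<n. A$$(i,l) * g j l) = lm j * g j i"
    using herm_eigen_family[OF A H, of n] by auto
  have og: "(\<Sum>l<n. cnj (g a l) * g b l) = (if a = b then 1 else 0)" if "a < n" "b < n" for a b
    using o that unfolding ortho_def by auto
  have Ah: "cnj (A$$(l,l')) = A$$(l',l)" if "l < n" "l' < n" for l l'
  proof -
    have "cadj A $$ (l',l) = cnj (A$$(l,l'))" using A that by simp
    then show ?thesis using H by simp
  qed
  have lmq: "conjugate (vec n (g k)) \<bullet> (A *\<^sub>v vec n (g k)) = lm k" if k: "k < n" for k
  proof -
    have "conjugate (vec n (g k)) \<bullet> (A *\<^sub>v vec n (g k)) = (\<Sum>i<n. cnj (g k i) * (\<Sum>l<n. A$$(i,l) * g k l))"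
      using A by (simp add: scalar_prod_def lessThan_atLeast0)
    also have "\<dots> = (\<Sum>i<n. lm k * (cnj (g k i) * g k i))"
      using ev k by (intro sum.cong refl) simp
    also have "\<dots> = lm k" using og[OF k k] by (simp add: sum_distrib_left[symmetric])
    finally show ?thesis .
  qed
  have lreal: "Im (lm k) = 0" "Re (lm k) \<ge> 0" if k: "k < n" for k
  proof -
    have "vec n (g k) \<in> carrier_vec n" by simp
    then have "Im (conjugate (vec n (g k)) \<bullet> (A *\<^sub>v vec n (g k))) = 0 \<and> Re (conjugate (vec n (g k)) \<bullet> (A *\<^sub>v vec n (g k))) \<ge> 0"
      using P unfolding psd_mat_def by blast
    then show "Im (lm k) = 0" "Re (lm k) \<ge> 0" using lmq[OF k] by simp_all
  qed
  define lam where "lam k = Re (lm k)" for k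
  have lml: "lm k = complex_of_real (lam k)" if "k < n" for k
    using lreal[OF that] unfolding lam_def by (simp add: complex_eq_iff)
  define W where "W = mat n n (\<lambda>(l,k). g k l)"
  have W: "W \<in> carrier_mat n n" unfolding W_def by simp
  have "A = W * diagm n (\<lambda>k. complex_of_real (lam k)) * cadj W"
  proof (rule mat_eqI[of _ n n])
    fix i j assume i: "i < n" and j: "j < n"
    have "A$$(i,j) = (\<Sum>c<n. (\<Sum>l<n. cnj (g c l) * A$$(l,j)) * g c i)"
      using ortho_expand[OF o i, of "\<lambda>l. A$$(l,j)"] by simp
    also have "\<dots> = (\<Sum>c<n. g c i * complex_of_real (lam c) * cnj (g c j))"
    proof (intro sum.cong refl)
      fix c assume c: "c \<in> {..<n}"
      have "(\<Sum>l<n. cnj (g c l) * A$$(l,j)) = (\<Sum>l<n. cnj (A$$(j,l) * g c l))"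
        using j by (intro sum.cong refl) (simp add: Ah mult.commute)
      also have "\<dots> = cnj (\<Sum>l<n. A$$(j,l) * g c l)" by simp
      also have "\<dots> = cnj (lm c * g c j)" using ev c j by simp
      also have "\<dots> = complex_of_real (lam c) * cnj (g c j)" using c lml by simp
      finally show "(\<Sum>l<n. cnj (g c l) * A$$(l,j)) * g c i = g c i * complex_of_real (lam c) * cnj (g c j)"
        by simp
    qed
    also have "\<dots> = (W * diagm n (\<lambda>k. complex_of_real (lam k)) * cadj W) $$ (i,j)"
      using W i j unfolding diag_conj_index[OF W i j] by (simp add: W_def)
    finally show "A$$(i,j) = (W * diagm n (\<lambda>k. complex_of_real (lam k)) * cadj W) $$ (i,j)" .
  next
    show "A \<in> carrier_mat n n" by (rule A)
    show "W * diagm n (\<lambda>k. complex_of_real (lam k)) * cadj W \<in> carrier_mat n n"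
      by (rule mult_carrier_mat[OF mult_carrier_mat[OF W diagm_carrier] cadj_carrier2[OF W]])
  qed
  moreover have "unitary_mat n W" unfolding W_def by (rule ortho_unitary[OF o])
  moreover have "\<forall>k<n. lam k \<ge> 0" using lreal unfolding lam_def by simp
  ultimately show ?thesis by blast
qed

lemma sq_assoc: "A \<in> carrier_mat n n \<Longrightarrow> B \<in> carrier_mat n n \<Longrightarrow> C \<in> carrier_mat n n \<Longrightarrow> A * B * C = A * (B * C)"
  by (rule assoc_mult_mat)
lemma sq_mult: "A \<in> carrier_mat n n \<Longrightarrow> B \<in> carrier_mat n n \<Longrightarrow> A * B \<in> carrier_mat n n"
  by (rule mult_carrier_mat)
lemma sq_cadj: "A \<in> carrier_mat n n \<Longrightarrow> cadj A \<in> carrier_mat n n"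
  by (rule cadj_carrier2)

lemma unitaryD: assumes "unitary_mat n U"
  shows "U \<in> carrier_mat n n" "cadj U * U = 1\<^sub>m n" "U * cadj U = 1\<^sub>m n" "cadj U \<in> carrier_mat n n"
  using assms unfolding unitary_mat_def by (auto intro: cadj_carrier2)

lemma unitary_mult: assumes U: "unitary_mat n U" and V: "unitary_mat n V"
  shows "unitary_mat n (U * V)"
proof (rule unitary_from_left)
  note u = unitaryD[OF U] and v = unitaryD[OF V]
  show "U * V \<in> carrier_mat n n" using u v by (simp add: sq_mult)
  have "cadj (U * V) * (U * V) = cadj V * (cadj U * U) * V"
    using u(1,4) v(1,4) by (simp add: cadj_mult[of U n n V n] sq_assoc[of _ n] sq_mult[of _ n])
  also have "\<dots> = 1\<^sub>m n" using u v by simp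
  finally show "cadj (U * V) * (U * V) = 1\<^sub>m n" .
qed

lemma psd_gram: assumes Y: "Y \<in> carrier_mat n n" shows "psd_mat n (cadj Y * Y)"
  unfolding psd_mat_def
proof (intro conjI ballI)
  show "cadj Y * Y \<in> carrier_mat n n" using Y by (simp add: sq_mult sq_cadj)
  show "cadj (cadj Y * Y) = cadj Y * Y" using Y by (simp add: cadj_mult[of _ n n _ n] sq_cadj)
  fix v :: "complex vec" assume v: "v \<in> carrier_vec n"
  have "conjugate v \<bullet> (cadj Y * Y *\<^sub>v v) = (\<Sum>i<n. cnj ((Y *\<^sub>v v) $ i) * (Y *\<^sub>v v) $ i)"
  proof -
    have e1: "(cadj Y * Y *\<^sub>v v) = cadj Y *\<^sub>v (Y *\<^sub>v v)"
      using Y v by (simp add: assoc_mult_mat_vec[of _ n n _ n] sq_cadj)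
    have "conjugate v \<bullet> (cadj Y *\<^sub>v (Y *\<^sub>v v)) = (\<Sum>j<n. cnj (v$j) * (\<Sum>i<n. cnj (Y$$(i,j)) * (Y *\<^sub>v v) $ i))"
      using Y v by (simp add: scalar_prod_def lessThan_atLeast0)
    also have "\<dots> = (\<Sum>j<n. \<Sum>i<n. cnj (Y$$(i,j) * v$j) * (Y *\<^sub>v v) $ i)"
      by (simp add: sum_distrib_left mult_ac)
    also have "\<dots> = (\<Sum>i<n. \<Sum>j<n. cnj (Y$$(i,j) * v$j) * (Y *\<^sub>v v) $ i)" by (rule sum.swap)
    also have "\<dots> = (\<Sum>i<n. cnj ((Y *\<^sub>v v) $ i) * (Y *\<^sub>v v) $ i)"
      using Y v by (intro sum.cong refl) (simp add: scalar_prod_def lessThan_atLeast0 sum_distrib_right)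
    finally show ?thesis using e1 by simp
  qed
  also have "\<dots> = complex_of_real (\<Sum>i<n. (cmod ((Y *\<^sub>v v) $ i))\<^sup>2)"
    by (simp add: cnj_mult_self)
  finally have e: "conjugate v \<bullet> (cadj Y * Y *\<^sub>v v) = complex_of_real (\<Sum>i<n. (cmod ((Y *\<^sub>v v) $ i))\<^sup>2)" .
  show "Im (conjugate v \<bullet> (cadj Y * Y *\<^sub>v v)) = 0" unfolding e by simp
  show "Re (conjugate v \<bullet> (cadj Y * Y *\<^sub>v v)) \<ge> 0" unfolding e by (simp add: sum_nonneg)
qed

lemma mult_diagm_index:
  assumes M: "M \<in> carrier_mat r n" and i: "i < r" and k: "k < n"
  shows "(M * diagm n f) $$ (i,k) = M$$(i,k) * f k"
proof -
  have d: "dim_row M = r" "dim_col M = n" using M by auto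
  have "(M * diagm n f) $$ (i,k) = (\<Sum>p<n. M$$(i,p) * (if p = k then f p else 0))"
    using d i k by (simp add: mult_index)
  also have "\<dots> = M$$(i,k) * f k" using k by (simp add: if_distrib cong: if_cong)
  finally show ?thesis .
qed

lemma unitary_cadj: "unitary_mat n U \<Longrightarrow> unitary_mat n (cadj U)"
  unfolding unitary_mat_def by (auto intro: cadj_carrier2)

lemma polar_sim:
  assumes Y: "Y \<in> carrier_mat n n"
  shows "\<exists>V. unitary_mat n V \<and> cadj V * (Y * cadj Y) * V = cadj Y * Y"
proof -
  define G where "G = cadj Y * Y"
  obtain W lam where Wu: "unitary_mat n W" and lam0: "\<forall>k<n. lam k \<ge> (0::real)"
    and GW: "G = W * diagm n (\<lambda>k. complex_of_real (lam k)) * cadj W"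
    using spectral_psd[OF psd_gram[OF Y]] unfolding G_def by blast
  define L where "L = diagm n (\<lambda>k. complex_of_real (lam k))"
  have Lc: "L \<in> carrier_mat n n" unfolding L_def by simp
  note w = unitaryD[OF Wu]
  have Yc': "cadj Y \<in> carrier_mat n n" using Y by (rule sq_cadj)
  define Z where "Z = Y * W"
  have Zc: "Z \<in> carrier_mat n n" unfolding Z_def using Y w(1) by (rule sq_mult)
  have Zc': "cadj Z \<in> carrier_mat n n" using Zc by (rule sq_cadj)
  have ZZ: "cadj Z * Z = L"
  proof -
    have "cadj Z * Z = cadj W * G * W"
      unfolding Z_def G_def using Y w(1,4) Yc'
      by (simp add: cadj_mult[of Y n n W n] sq_assoc[of _ n] sq_mult[of _ n])
    also have "\<dots> = (cadj W * W) * L * (cadj W * W)"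
      unfolding GW L_def[symmetric] using w(1,4) Lc
      by (simp add: sq_assoc[of _ n] sq_mult[of _ n])
    also have "\<dots> = L" using w(2) Lc by simp
    finally show ?thesis .
  qed
  have col: "(\<Sum>l<n. cnj (Z$$(l,j)) * Z$$(l,k)) = (if j = k then complex_of_real (lam k) else 0)"
    if j: "j < n" and k: "k < n" for j k
  proof -
    have "(cadj Z * Z) $$ (j,k) = (\<Sum>l<n. cnj (Z$$(l,j)) * Z$$(l,k))"
      using Zc j k by (simp add: mult_index)
    moreover have "(cadj Z * Z) $$ (j,k) = (if j = k then complex_of_real (lam k) else 0)"
      unfolding ZZ L_def using j k by simp
    ultimately show ?thesis by simp
  qed
  define K where "K = {k. k < n \<and> lam k > 0}"
  define g where "g k l = Z$$(l,k) / complex_of_real (sqrt (lam k))" for k l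
  have oK: "ortho n g K" unfolding ortho_def
  proof (intro ballI)
    fix j k assume j: "j \<in> K" and k: "k \<in> K"
    have "(\<Sum>l<n. cnj (g j l) * g k l) = (\<Sum>l<n. cnj (Z$$(l,j)) * Z$$(l,k)) /
        (complex_of_real (sqrt (lam j)) * complex_of_real (sqrt (lam k)))"
      unfolding g_def by (simp add: sum_divide_distrib)
    also have "\<dots> = (if j = k then 1 else 0)"
    proof (cases "j = k")
      case True
      have lk: "lam k > 0" using k unfolding K_def by simp
      have "complex_of_real (sqrt (lam k)) * complex_of_real (sqrt (lam k)) = complex_of_real (lam k)"
        using lk by (simp flip: of_real_mult)
      then show ?thesis using True col[of k k] k lk unfolding K_def by simp
    next
      case False
      then show ?thesis using col[of j k] j k unfolding K_def by simp
    qed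
    finally show "(\<Sum>l<n. cnj (g j l) * g k l) = (if j = k then 1 else 0)" .
  qed
  obtain g' where o': "ortho n g' {..<n}" and gg: "\<forall>k\<in>K. g' k = g k"
    using ortho_complete[OF _ oK] unfolding K_def by auto
  define Q where "Q = mat n n (\<lambda>(l,k). g' k l)"
  have Qu: "unitary_mat n Q" unfolding Q_def by (rule ortho_unitary[OF o'])
  note q = unitaryD[OF Qu]
  define S where "S = diagm n (\<lambda>k. complex_of_real (sqrt (lam k)))"
  have Sc: "S \<in> carrier_mat n n" unfolding S_def by simp
  have Sc': "cadj S \<in> carrier_mat n n" using Sc by (rule sq_cadj)
  have ZQS: "Z = Q * S"
  proof (rule mat_eqI[of _ n n])
    fix l k assume l: "l < n" and k: "k < n"
    have "(Q * S) $$ (l,k) = Q$$(l,k) * complex_of_real (sqrt (lam k))"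
      unfolding S_def using mult_diagm_index[OF q(1) l k] .
    also have "\<dots> = Z$$(l,k)"
    proof (cases "k \<in> K")
      case True
      then have lk: "lam k > 0" unfolding K_def by simp
      have "Q$$(l,k) = g k l" using True gg l k unfolding Q_def by simp
      then show ?thesis using lk unfolding g_def by simp
    next
      case False
      with k lam0 have lk: "lam k = 0" unfolding K_def by force
      have "complex_of_real (\<Sum>l<n. (cmod (Z$$(l,k)))\<^sup>2) = (\<Sum>l<n. cnj (Z$$(l,k)) * Z$$(l,k))"
        by (simp add: cnj_mult_self)
      also have "\<dots> = 0" using col[OF k k] lk by simp
      finally have "(\<Sum>l<n. (cmod (Z$$(l,k)))\<^sup>2) = 0" by (simp only: of_real_eq_0_iff)
      then have "\<forall>l\<in>{..<n}. (cmod (Z$$(l,k)))\<^sup>2 = 0"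
        by (subst sum_nonneg_eq_0_iff[symmetric]) auto
      then have "Z$$(l,k) = 0" using l by simp
      then show ?thesis using lk by simp
    qed
    finally show "Z $$ (l,k) = (Q * S) $$ (l,k)" by simp
  next
    show "Z \<in> carrier_mat n n" by (rule Zc)
    show "Q * S \<in> carrier_mat n n" using q(1) Sc by (rule sq_mult)
  qed
  have SS: "S * cadj S = L"
  proof (rule mat_eqI[of _ n n])
    fix i j assume i: "i < n" and j: "j < n"
    have cS: "cadj S = S" unfolding S_def by (rule eq_matI) auto
    have "(S * cadj S) $$ (i,j) = S$$(i,j) * complex_of_real (sqrt (lam j))"
      unfolding cS using mult_diagm_index[OF Sc i j] unfolding S_def by simp
    also have "\<dots> = L $$ (i,j)"
      using i j lam0 unfolding S_def L_def by (simp flip: of_real_mult)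
    finally show "(S * cadj S) $$ (i,j) = L $$ (i,j)" .
  next
    show "S * cadj S \<in> carrier_mat n n" using Sc Sc' by (rule sq_mult)
    show "L \<in> carrier_mat n n" by (rule Lc)
  qed
  have YZ: "Y = Z * cadj W"
    unfolding Z_def using Y w(1,3,4) by (simp add: sq_assoc[of _ n])
  have YY: "Y * cadj Y = Q * L * cadj Q"
  proof -
    have "Y * cadj Y = Z * (cadj W * W) * cadj Z"
      unfolding YZ using Zc Zc' w(1,4) by (simp add: cadj_mult[of Z n n "cadj W" n] sq_assoc[of _ n] sq_mult[of _ n])
    also have "\<dots> = Z * cadj Z" using w(2) Zc Zc' by simp
    also have "\<dots> = Q * (S * cadj S) * cadj Q"
      unfolding ZQS using q(1,4) Sc Sc' by (simp add: cadj_mult[of Q n n S n] sq_assoc[of _ n] sq_mult[of _ n])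
    finally show ?thesis unfolding SS .
  qed
  define V where "V = Q * cadj W"
  have Vu: "unitary_mat n V" unfolding V_def by (rule unitary_mult[OF Qu unitary_cadj[OF Wu]])
  have "cadj V * (Y * cadj Y) * V = W * (cadj Q * Q) * L * (cadj Q * Q) * cadj W"
    unfolding V_def YY using q(1,4) w(1,4) Lc
    by (simp add: cadj_mult[of Q n n "cadj W" n] sq_assoc[of _ n] sq_mult[of _ n])
  also have "\<dots> = W * L * cadj W" using q(2) w(1,4) Lc by simp
  also have "\<dots> = cadj Y * Y" using GW unfolding G_def L_def by simp
  finally show ?thesis using Vu by blast
qed

lemma cis_ne_1:
  fixes k l m :: nat
  assumes "k < m" "l < m" "k \<noteq> l"
  shows "cis (2 * pi * (real l - real k) / real m) \<noteq> 1"
proof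
  assume c: "cis (2 * pi * (real l - real k) / real m) = 1"
  have "cos (2 * pi * (real l - real k) / real m) = 1"
    using arg_cong[OF c, of Re] by simp
  then obtain n :: int where n: "2 * pi * (real l - real k) / real m = of_int n * 2 * pi"
    using cos_one_2pi_int by blast
  have m0: "real m > 0" using assms by simp
  from n have "2 * pi * (real l - real k) = 2 * pi * (of_int n * real m)"
    using m0 by (simp add: field_simps)
  then have "real l - real k = of_int n * real m" using pi_gt_zero by simp
  then have e: "int l - int k = n * int m"
    by (metis of_int_eq_iff of_int_mult of_int_diff of_int_of_nat_eq)
  show False
  proof (cases "n = 0")
    case True with e assms show False by simp
  next
    case False
    then have "\<bar>n\<bar> \<ge> 1" by linarith
    then have "\<bar>n * int m\<bar> \<ge> int m" by (simp add: abs_mult mult_le_cancel_right1)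
    moreover have "\<bar>int l - int k\<bar> < int m" using assms by linarith
    ultimately show False using e by simp
  qed
qed

lemma roots_sum:
  fixes k l m :: nat
  assumes "k < m" "l < m"
  shows "(\<Sum>a<m. cnj (cis (2*pi*real a*real k/real m)) * cis (2*pi*real a*real l/real m))
         = (if k = l then of_nat m else 0)"
proof -
  define z where "z = cis (2 * pi * (real l - real k) / real m)"
  have t: "cnj (cis (2*pi*real a*real k/real m)) * cis (2*pi*real a*real l/real m) = z ^ a" for a
  proof -
    have "- (2*pi*real a*real k/real m) + 2*pi*real a*real l/real m = real a * (2 * pi * (real l - real k) / real m)"
      by (simp add: algebra_simps diff_divide_distrib)
    then show ?thesis unfolding z_def by (simp add: cis_cnj cis_mult DeMoivre)
  qed
  show ?thesis
  proof (cases "k = l")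
    case True
    then show ?thesis unfolding t z_def by simp
  next
    case False
    have z1: "z \<noteq> 1" unfolding z_def by (rule cis_ne_1[OF assms False])
    have m0: "real m > 0" using assms by simp
    have "real m * (2 * pi * (real l - real k) / real m) = 2 * pi * (real l - real k)"
      using m0 by simp
    then have "z ^ m = cis (2 * pi * (real l - real k))"
      unfolding z_def DeMoivre by metis
    also have "\<dots> = 1"
    proof -
      have "real l - real k \<in> \<int>" by (metis Ints_diff Ints_of_nat)
      then show ?thesis by (metis cis_multiple_2pi)
    qed
    finally have zm: "z ^ m = 1" .
    have "(\<Sum>a<m. z ^ a) = (z ^ m - 1) / (z - 1)" by (rule geometric_sum[OF z1])
    then show ?thesis unfolding t using zm False by simp
  qed
qed

lemma blk_iff: "(0::nat) < d \<Longrightarrow> (i*d \<le> k \<and> k < (i+1)*d) \<longleftrightarrow> k div d = i"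
  by (meson div_less_iff_less_mult le_antisym less_add_one less_eq_div_iff_mult_less_eq less_inc_imp_less_eq)

lemma foldr_msum:
  assumes "\<forall>i\<in>set xs. f i \<in> carrier_mat r c"
  shows "foldr (\<lambda>i acc. f i + acc) xs (0\<^sub>m r c) \<in> carrier_mat r c \<and>
    (\<forall>k<r. \<forall>l<c. foldr (\<lambda>i acc. f i + acc) xs (0\<^sub>m r c) $$ (k,l) = (\<Sum>i\<leftarrow>xs. f i $$ (k,l)))"
  using assms
proof (induction xs)
  case Nil
  then show ?case by simp
next
  case (Cons x xs)
  then have fx: "f x \<in> carrier_mat r c" and IH: "foldr (\<lambda>i acc. f i + acc) xs (0\<^sub>m r c) \<in> carrier_mat r c \<and>
    (\<forall>k<r. \<forall>l<c. foldr (\<lambda>i acc. f i + acc) xs (0\<^sub>m r c) $$ (k,l) = (\<Sum>i\<leftarrow>xs. f i $$ (k,l)))" by auto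
  have d: "dim_row (f x) = r" "dim_col (f x) = c" using fx by auto
  let ?F = "foldr (\<lambda>i acc. f i + acc) xs (0\<^sub>m r c)"
  have Fc: "?F \<in> carrier_mat r c" using IH by blast
  have "f x + ?F \<in> carrier_mat r c" by (rule add_carrier_mat[OF Fc])
  moreover have "\<forall>k<r. \<forall>l<c. (f x + ?F) $$ (k,l) = (\<Sum>i\<leftarrow>x#xs. f i $$ (k,l))"
  proof (intro allI impI)
    fix k l assume "k < r" "l < c"
    then show "(f x + ?F) $$ (k,l) = (\<Sum>i\<leftarrow>x#xs. f i $$ (k,l))"
      using IH Fc by simp
  qed
  ultimately show ?case by simp
qed

lemma msum_eq:
  assumes "\<forall>i<m. f i \<in> carrier_mat r c"
  shows "msum r c f m = mat r c (\<lambda>(k,l). \<Sum>i<m. f i $$ (k,l))"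
proof -
  have a: "\<forall>i\<in>set [0..<m]. f i \<in> carrier_mat r c" using assms by simp
  note F = foldr_msum[OF a]
  have Fc: "foldr (\<lambda>i acc. f i + acc) [0..<m] (0\<^sub>m r c) \<in> carrier_mat r c" using F by blast
  show ?thesis unfolding msum_def
  proof (rule eq_matI)
    fix k l assume k: "k < dim_row (mat r c (\<lambda>(k,l). \<Sum>i<m. f i $$ (k,l)))" and l: "l < dim_col (mat r c (\<lambda>(k,l). \<Sum>i<m. f i $$ (k,l)))"
    then have "k < r" "l < c" by auto
    then show "foldr (\<lambda>i acc. f i + acc) [0..<m] (0\<^sub>m r c) $$ (k,l) = mat r c (\<lambda>(k,l). \<Sum>i<m. f i $$ (k,l)) $$ (k,l)"
      using F by (simp add: sum_list_distinct_conv_sum_set lessThan_atLeast0)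
  next
    show "dim_row (foldr (\<lambda>i acc. f i + acc) [0..<m] (0\<^sub>m r c)) = dim_row (mat r c (\<lambda>(k,l). \<Sum>i<m. f i $$ (k,l)))"
      using Fc by simp
    show "dim_col (foldr (\<lambda>i acc. f i + acc) [0..<m] (0\<^sub>m r c)) = dim_col (mat r c (\<lambda>(k,l). \<Sum>i<m. f i $$ (k,l)))"
      using Fc by simp
  qed
qed

lemma sum_delta_l: fixes n :: nat shows "(\<Sum>p<n. (if k = p \<and> Q then 1 else 0) * f p) = (if Q \<and> k < n then f k else (0::complex))"
  by (induction n) auto
lemma sum_delta_r: fixes n :: nat shows "(\<Sum>p<n. f p * (if p = k \<and> Q p then 1 else 0)) = (if Q k \<and> k < n then f k else (0::complex))"
  by (induction n) auto
lemma sum_delta_if0: "(\<Sum>i<m. if i0 = i \<and> j0 = i then x else 0) = (if i0 = j0 \<and> (i0::nat) < m then x else (0::complex))"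
  by (induction m) auto
lemma sum_delta_if: "(i0::nat) < m \<Longrightarrow> (\<Sum>i<m. if i0 = i \<and> j0 = i then x else 0) = (if i0 = j0 then x else (0::complex))"
  by (simp add: sum_delta_if0)

lemma blockproj_carrier[simp]: "blockproj d m i \<in> carrier_mat (d*m) (d*m)"
  unfolding blockproj_def by simp
lemma blockproj_dims[simp]: "dim_row (blockproj d m i) = d*m" "dim_col (blockproj d m i) = d*m"
  unfolding blockproj_def by simp_all

lemma blockproj_index:
  assumes "k < d*m" "l < d*m"
  shows "blockproj d m i $$ (k,l) = (if k = l \<and> k div d = i then 1 else 0)"
proof -
  have d: "d > 0" using assms by (cases "d = 0") simp_all
  have "blockproj d m i $$ (k,l) = (if k = l \<and> i*d \<le> k \<and> k < (i+1)*d then 1 else 0)"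
    unfolding blockproj_def using assms by simp
  also have "\<dots> = (if k = l \<and> k div d = i then 1 else 0)" using blk_iff[OF d, of i k] by simp
  finally show ?thesis .
qed


lemma div_less_m: fixes k d m :: nat shows "k < d*m \<Longrightarrow> k div d < m"
  using less_mult_imp_div_less[of k m d] by (simp add: mult.commute)

lemma proj_mult_index:
  assumes X: "X \<in> carrier_mat (d*m) (d*m)" and k: "k < d*m" and l: "l < d*m"
  shows "(blockproj d m i * X * blockproj d m i) $$ (k,l) = (if k div d = i \<and> l div d = i then X$$(k,l) else 0)"
proof -
  let ?P = "blockproj d m i"
  have dX: "dim_row X = d*m" "dim_col X = d*m" using X by auto
  have PX: "(?P * X) $$ (k,q) = (if k div d = i then X$$(k,q) else 0)" if q: "q < d*m" for q
  proof -
    have "(?P * X) $$ (k,q) = (\<Sum>p<d*m. (if k = p \<and> k div d = i then 1 else 0) * X$$(p,q))"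
      using k q dX by (simp add: mult_index blockproj_index)
    also have "\<dots> = (if k div d = i then X$$(k,q) else 0)"
      using k by (simp only: sum_delta_l) simp
    finally show ?thesis .
  qed
  have "(?P * X * ?P) $$ (k,l) = (\<Sum>q<d*m. (?P * X) $$ (k,q) * (if q = l \<and> q div d = i then 1 else 0))"
    using k l dX by (simp add: mult_index blockproj_index)
  also have "\<dots> = (\<Sum>q<d*m. (if k div d = i then X$$(k,q) else 0) * (if q = l \<and> q div d = i then 1 else 0))"
    by (intro sum.cong refl) (simp add: PX)
  also have "\<dots> = (if k div d = i \<and> l div d = i then X$$(k,l) else 0)"
    using l by (simp only: sum_delta_r) simp
  finally show ?thesis .
qed

lemma pinching_eq:
  assumes X: "X \<in> carrier_mat (d*m) (d*m)"
  shows "pinching d m X = mat (d*m) (d*m) (\<lambda>(k,l). if k div d = l div d then X$$(k,l) else 0)"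
proof -
  have c: "\<forall>i<m. blockproj d m i * X * blockproj d m i \<in> carrier_mat (d*m) (d*m)"
  proof (intro allI impI)
    fix i
    show "blockproj d m i * X * blockproj d m i \<in> carrier_mat (d*m) (d*m)"
      by (rule sq_mult[OF sq_mult[OF blockproj_carrier X] blockproj_carrier])
  qed
  show ?thesis unfolding pinching_def msum_eq[OF c]
  proof (rule eq_matI)
    fix k l assume "k < dim_row (mat (d*m) (d*m) (\<lambda>(k,l). if k div d = l div d then X$$(k,l) else 0))"
      "l < dim_col (mat (d*m) (d*m) (\<lambda>(k,l). if k div d = l div d then X$$(k,l) else 0))"
    then have k: "k < d*m" and l: "l < d*m" by auto
    have "(\<Sum>i<m. (blockproj d m i * X * blockproj d m i) $$ (k,l))
       = (\<Sum>i<m. if k div d = i \<and> l div d = i then X$$(k,l) else 0)"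
      by (intro sum.cong refl) (simp add: proj_mult_index[OF X k l])
    also have "\<dots> = (if k div d = l div d then X$$(k,l) else 0)"
      using div_less_m[OF k] by (rule sum_delta_if)
    finally show "mat (d*m) (d*m) (\<lambda>(k,l). \<Sum>i<m. (blockproj d m i * X * blockproj d m i) $$ (k,l)) $$ (k,l)
      = mat (d*m) (d*m) (\<lambda>(k,l). if k div d = l div d then X$$(k,l) else 0) $$ (k,l)"
      using k l by simp
  qed auto
qed

lemma sum_delta_c: fixes n :: nat shows "(\<Sum>j<n. (if i = j then c else 0) * f j) = (if i < n then c * f i else (0::complex))"
  by (induction n) (auto simp: less_Suc_eq)

lemma psd_diagm:
  assumes lam0: "\<forall>k<n. lam k \<ge> (0::real)"
  shows "psd_mat n (diagm n (\<lambda>k. complex_of_real (lam k)))"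
  unfolding psd_mat_def
proof (intro conjI ballI)
  let ?D = "diagm n (\<lambda>k. complex_of_real (lam k))"
  show "?D \<in> carrier_mat n n" by simp
  show "cadj ?D = ?D" by (rule eq_matI) auto
  fix v :: "complex vec" assume v: "v \<in> carrier_vec n"
  have "conjugate v \<bullet> (?D *\<^sub>v v) = (\<Sum>i<n. cnj (v$i) * (\<Sum>j<n. (if i = j then complex_of_real (lam i) else 0) * v$j))"
    using v by (simp add: scalar_prod_def lessThan_atLeast0)
  also have "\<dots> = (\<Sum>i<n. complex_of_real (lam i * (cmod (v$i))\<^sup>2))"
  proof (intro sum.cong refl)
    fix i assume i: "i \<in> {..<n}"
    have "(\<Sum>j<n. (if i = j then complex_of_real (lam i) else 0) * v$j) = complex_of_real (lam i) * v$i"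
      using sum_delta_c[where n=n and i=i and c="complex_of_real (lam i)" and f="\<lambda>j. v$j"] i by simp
    then have "cnj (v$i) * (\<Sum>j<n. (if i = j then complex_of_real (lam i) else 0) * v$j)
        = complex_of_real (lam i) * (cnj (v$i) * v$i)" by (simp only: mult_ac)
    also have "\<dots> = complex_of_real (lam i) * complex_of_real ((cmod (v$i))\<^sup>2)" by (simp only: cnj_mult_self)
    also have "\<dots> = complex_of_real (lam i * (cmod (v$i))\<^sup>2)" by (simp only: of_real_mult)
    finally show "cnj (v$i) * (\<Sum>j<n. (if i = j then complex_of_real (lam i) else 0) * v$j) = complex_of_real (lam i * (cmod (v$i))\<^sup>2)" .
  qed
  also have "\<dots> = complex_of_real (\<Sum>i<n. lam i * (cmod (v$i))\<^sup>2)" by simp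
  finally have e: "conjugate v \<bullet> (?D *\<^sub>v v) = complex_of_real (\<Sum>i<n. lam i * (cmod (v$i))\<^sup>2)" .
  show "Im (conjugate v \<bullet> (?D *\<^sub>v v)) = 0" unfolding e by simp
  have "0 \<le> (\<Sum>i<n. lam i * (cmod (v$i))\<^sup>2)" using lam0 by (intro sum_nonneg) simp
  then show "Re (conjugate v \<bullet> (?D *\<^sub>v v)) \<ge> 0" unfolding e by simp
qed

lemma sum_mod_reindex:
  fixes d m r :: nat and f :: "nat \<Rightarrow> complex"
  assumes r: "r < d"
  shows "(\<Sum>p<d*m. if p mod d = r then f p else 0) = (\<Sum>a<m. f (a*d + r))"
proof (induction m)
  case 0 show ?case by simp
next
  case (Suc m)
  have "(\<Sum>p<d*Suc m. if p mod d = r then f p else 0)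
     = (\<Sum>p<d*m. if p mod d = r then f p else 0) + (\<Sum>a<d*Suc m - d*m. if (d*m+a) mod d = r then f (d*m+a) else 0)"
    by (rule sum_split_at) simp
  also have "(\<Sum>a<d*Suc m - d*m. if (d*m+a) mod d = r then f (d*m+a) else 0) = (\<Sum>a<d. if a = r then f (d*m+a) else 0)"
    by (intro sum.cong refl) auto
  also have "\<dots> = f (m*d + r)" using r by (simp add: mult.commute)
  finally show ?case using Suc by simp
qed

definition fourier :: "nat \<Rightarrow> nat \<Rightarrow> complex mat" where
  "fourier d m = mat (d*m) (d*m) (\<lambda>(p,c). if p mod d = c mod d then
     cis (2*pi*real (p div d)*real (c div d)/real m) / complex_of_real (sqrt (real m)) else 0)"

lemma fourier_carrier[simp]: "fourier d m \<in> carrier_mat (d*m) (d*m)"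
  unfolding fourier_def by simp
lemma fourier_dims[simp]: "dim_row (fourier d m) = d*m" "dim_col (fourier d m) = d*m"
  unfolding fourier_def by simp_all

lemma fourier_prod:
  assumes p: "p < d*m" and k: "k < d*m" and l: "l < d*m"
  shows "cnj (fourier d m $$ (p,k)) * fourier d m $$ (p,l) =
    (if k mod d = l mod d then (if p mod d = k mod d then
       cnj (cis (2*pi*real (p div d)*real (k div d)/real m)) * cis (2*pi*real (p div d)*real (l div d)/real m) / of_nat m else 0) else 0)"
proof -
  have m0: "real m > 0" using p by (cases "m = 0") simp_all
  have s: "cnj (complex_of_real (sqrt (real m))) * complex_of_real (sqrt (real m)) = of_nat m"
    using m0 by (simp flip: of_real_mult)
  show ?thesis unfolding fourier_def using p k l s by (auto simp: divide_simps)
qed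

lemma fourier_unitary:
  assumes m0: "m > 0"
  shows "unitary_mat (d*m) (fourier d m)"
proof (rule unitary_from_left)
  let ?F = "fourier d m"
  show Fc: "?F \<in> carrier_mat (d*m) (d*m)" by simp
  show "cadj ?F * ?F = 1\<^sub>m (d*m)"
  proof (rule mat_eqI[of _ "d*m" "d*m"])
    fix k l assume k: "k < d*m" and l: "l < d*m"
    have d0: "d > 0" using k by (cases "d = 0") simp_all
    define T where "T p = cnj (cis (2*pi*real (p div d)*real (k div d)/real m)) * cis (2*pi*real (p div d)*real (l div d)/real m) / of_nat m" for p
    have "(cadj ?F * ?F) $$ (k,l) = (\<Sum>p<d*m. cnj (?F $$ (p,k)) * ?F $$ (p,l))"
      using k l by (simp add: mult_index)
    also have "\<dots> = (\<Sum>p<d*m. if k mod d = l mod d then (if p mod d = k mod d then T p else 0) else 0)"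
      using k l unfolding T_def by (intro sum.cong refl) (simp add: fourier_prod)
    also have "\<dots> = (if k mod d = l mod d then (if k div d = l div d then 1 else 0) else 0)"
    proof (cases "k mod d = l mod d")
      case True
      have "(\<Sum>p<d*m. if p mod d = k mod d then T p else 0) = (\<Sum>a<m. T (a*d + k mod d))"
        by (rule sum_mod_reindex) (simp add: d0)
      also have "\<dots> = (\<Sum>a<m. cnj (cis (2*pi*real a*real (k div d)/real m)) * cis (2*pi*real a*real (l div d)/real m)) / of_nat m"
        unfolding T_def using d0 by (simp add: sum_divide_distrib)
      also have "\<dots> = (if k div d = l div d then 1 else 0)"
        using roots_sum[OF div_less_m[OF k] div_less_m[OF l]] m0 by simp
      finally show ?thesis using True by simp
    qed simp
    also have "\<dots> = 1\<^sub>m (d*m) $$ (k,l)"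
    proof -
      have "(k mod d = l mod d \<and> k div d = l div d) = (k = l)" by (metis div_mult_mod_eq)
      then show ?thesis using k l by auto
    qed
    finally show "(cadj ?F * ?F) $$ (k,l) = 1\<^sub>m (d*m) $$ (k,l)" .
  next
    show "cadj ?F * ?F \<in> carrier_mat (d*m) (d*m)" by (rule sq_mult[OF sq_cadj[OF Fc] Fc])
    show "1\<^sub>m (d*m) \<in> carrier_mat (d*m) (d*m)" by simp
  qed
qed

lemma idx_bound: fixes a d m r :: nat assumes "a < m" "r < d" shows "a*d + r < d*m"
proof -
  have "a*d + r < a*d + d" using assms by simp
  also have "\<dots> = (a+1)*d" by simp
  also have "\<dots> \<le> m*d" using assms by (intro mult_le_mono1) simp
  finally show ?thesis by (simp add: mult.commute)
qed

lemma blockdiag_index: "k < d*m \<Longrightarrow> l < d*m \<Longrightarrow>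
  blockdiag d m B $$ (k,l) = (if k div d = l div d then B (k div d) $$ (k mod d, l mod d) else 0)"
  unfolding blockdiag_def by simp
lemma blockdiag_carrier[simp]: "blockdiag d m B \<in> carrier_mat (d*m) (d*m)"
  unfolding blockdiag_def by simp
lemma blockdiag_dims[simp]: "dim_row (blockdiag d m B) = d*m" "dim_col (blockdiag d m B) = d*m"
  unfolding blockdiag_def by simp_all

lemma cis_cnj_self: "cnj (cis x) * cis x = 1"
  by (simp add: cis_cnj cis_mult)

lemma part1:
  assumes m0: "m > 0" and P: "psd_mat (d*m) A"
  shows "\<exists>U D. unitary_mat (d*m) U \<and> psd_mat d D \<and>
            pinching d m (cadj U * A * U) = (1 / of_nat m) \<cdot>\<^sub>m blockdiag d m (\<lambda>_. D)"
proof -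
  let ?n = "d*m"
  obtain W lam where Wu: "unitary_mat ?n W" and lam0: "\<forall>k<?n. lam k \<ge> (0::real)"
    and AW: "A = W * diagm ?n (\<lambda>k. complex_of_real (lam k)) * cadj W"
    using spectral_psd[OF P] by blast
  define L where "L = diagm ?n (\<lambda>k. complex_of_real (lam k))"
  have Lc: "L \<in> carrier_mat ?n ?n" unfolding L_def by simp
  note w = unitaryD[OF Wu]
  define F where "F = fourier d m"
  have Fu: "unitary_mat ?n F" unfolding F_def by (rule fourier_unitary[OF m0])
  note f = unitaryD[OF Fu]
  define U where "U = W * F"
  have Uu: "unitary_mat ?n U" unfolding U_def by (rule unitary_mult[OF Wu Fu])
  have UAU: "cadj U * A * U = cadj F * (cadj W * W) * L * (cadj W * W) * F"
    unfolding U_def AW L_def[symmetric] using w(1,4) f(1,4) Lc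
    by (simp add: cadj_mult[of W ?n ?n F ?n] sq_assoc[of _ ?n] sq_mult[of _ ?n])
  also have "\<dots> = cadj F * L * F" using w(2) f(1,4) Lc by simp
  finally have UAU: "cadj U * A * U = cadj F * L * F" .
  define M where "M = cadj F * L * F"
  have Mc: "M \<in> carrier_mat ?n ?n" unfolding M_def using f(1,4) Lc by (simp add: sq_mult[of _ ?n])
  define D where "D = diagm d (\<lambda>r. complex_of_real (\<Sum>a<m. lam (a*d + r)))"
  have Dpsd: "psd_mat d D" unfolding D_def
  proof (rule psd_diagm, intro allI impI)
    fix r assume r: "r < d"
    show "0 \<le> (\<Sum>a<m. lam (a*d + r))" using lam0 idx_bound r by (intro sum_nonneg) simp
  qed
  have Ment: "M $$ (k,l) = (if k mod d = l mod d then complex_of_real (\<Sum>a<m. lam (a*d + k mod d)) / of_nat m else 0)"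
    if k: "k < ?n" and l: "l < ?n" and kl: "k div d = l div d" for k l
  proof -
    have d0: "d > 0" using k by (cases "d = 0") simp_all
    have "M $$ (k,l) = (cadj F * L * cadj (cadj F)) $$ (k,l)" unfolding M_def by simp
    also have "\<dots> = (\<Sum>p<?n. cadj F $$ (k,p) * complex_of_real (lam p) * cnj (cadj F $$ (l,p)))"
      unfolding L_def by (rule diag_conj_index[OF f(4) k l])
    also have "\<dots> = (\<Sum>p<?n. complex_of_real (lam p) * (cnj (F $$ (p,k)) * F $$ (p,l)))"
      using k l f(1) by (intro sum.cong refl) (simp add: mult_ac)
    also have "\<dots> = (\<Sum>p<?n. if k mod d = l mod d then (if p mod d = k mod d then complex_of_real (lam p) / of_nat m else 0) else 0)"
      using k l kl unfolding F_def by (intro sum.cong refl) (simp add: fourier_prod cis_cnj_self)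
    also have "\<dots> = (if k mod d = l mod d then complex_of_real (\<Sum>a<m. lam (a*d + k mod d)) / of_nat m else 0)"
    proof (cases "k mod d = l mod d")
      case True
      have "(\<Sum>p<?n. if p mod d = k mod d then complex_of_real (lam p) / of_nat m else 0)
          = (\<Sum>a<m. complex_of_real (lam (a*d + k mod d)) / of_nat m)"
        by (rule sum_mod_reindex) (simp add: d0)
      also have "\<dots> = complex_of_real (\<Sum>a<m. lam (a*d + k mod d)) / of_nat m"
        by (simp add: sum_divide_distrib)
      finally show ?thesis using True by simp
    qed simp
    finally show ?thesis .
  qed
  have "pinching d m (cadj U * A * U) = (1 / of_nat m) \<cdot>\<^sub>m blockdiag d m (\<lambda>_. D)"
    unfolding UAU M_def[symmetric] pinching_eq[OF Mc]
  proof (rule eq_matI)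
    fix k l assume "k < dim_row ((1 / of_nat m) \<cdot>\<^sub>m blockdiag d m (\<lambda>_. D))"
      "l < dim_col ((1 / of_nat m) \<cdot>\<^sub>m blockdiag d m (\<lambda>_. D))"
    then have k: "k < ?n" and l: "l < ?n" by auto
    have d0: "d > 0" using k by (cases "d = 0") simp_all
    have km: "k mod d < d" "l mod d < d" using d0 by simp_all
    show "mat ?n ?n (\<lambda>(k,l). if k div d = l div d then M$$(k,l) else 0) $$ (k,l) =
        ((1 / of_nat m) \<cdot>\<^sub>m blockdiag d m (\<lambda>_. D)) $$ (k,l)"
      using k l km by (simp add: blockdiag_index Ment D_def)
  qed simp_all
  then show ?thesis using Uu Dpsd by blast
qed

lemma blockproj_cadj: "cadj (blockproj d m i) = blockproj d m i"
proof (rule eq_matI)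
  fix k l assume "k < dim_row (blockproj d m i)" "l < dim_col (blockproj d m i)"
  then have k: "k < d*m" and l: "l < d*m" by simp_all
  show "cadj (blockproj d m i) $$ (k,l) = blockproj d m i $$ (k,l)"
    using k l by (auto simp: blockproj_index)
qed simp_all

lemma blockproj_idem: "blockproj d m i * blockproj d m i = blockproj d m i"
proof (rule eq_matI)
  fix k l assume "k < dim_row (blockproj d m i)" "l < dim_col (blockproj d m i)"
  then have k: "k < d*m" and l: "l < d*m" by simp_all
  have "(blockproj d m i * blockproj d m i) $$ (k,l)
     = (\<Sum>p<d*m. (if k = p \<and> k div d = i then 1 else 0) * (if p = l \<and> p div d = i then 1 else 0))"
    using k l by (simp add: mult_index blockproj_index)
  also have "\<dots> = (if k div d = i then (if k = l \<and> k div d = i then 1 else 0) else 0)"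
    using k by (simp only: sum_delta_l) simp
  also have "\<dots> = blockproj d m i $$ (k,l)" using k l by (auto simp: blockproj_index)
  finally show "(blockproj d m i * blockproj d m i) $$ (k,l) = blockproj d m i $$ (k,l)" .
qed simp_all

definition blkemb :: "nat \<Rightarrow> nat \<Rightarrow> nat \<Rightarrow> complex mat" where
  "blkemb d m i = mat (d*m) d (\<lambda>(k,r). if k = i*d + r then 1 else 0)"

lemma blkemb_carrier[simp]: "blkemb d m i \<in> carrier_mat (d*m) d" unfolding blkemb_def by simp
lemma blkemb_dims[simp]: "dim_row (blkemb d m i) = d*m" "dim_col (blkemb d m i) = d" unfolding blkemb_def by simp_all

lemma cnj_if01: "cnj (if P then 1 else 0) = (if P then 1 else (0::complex))" by simp

lemma blkemb_proj: "blkemb d m i * cadj (blkemb d m i) = blockproj d m i"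
proof (rule eq_matI)
  fix k l assume "k < dim_row (blockproj d m i)" "l < dim_col (blockproj d m i)"
  then have k: "k < d*m" and l: "l < d*m" by simp_all
  have d0: "d > 0" using k by (cases "d = 0") simp_all
  have "(blkemb d m i * cadj (blkemb d m i)) $$ (k,l)
      = (\<Sum>r<d. (if k = i*d + r then 1 else 0) * (if l = i*d + r then 1 else 0))"
    using k l by (simp add: mult_index blkemb_def cnj_if01)
  also have "\<dots> = (if k = l \<and> k div d = i then 1 else 0)"
  proof (cases "k div d = i")
    case True
    then have "k = i*d + k mod d" by (metis div_mult_mod_eq)
    then have "(\<Sum>r<d. (if k = i*d + r then 1 else 0) * (if l = i*d + r then 1 else (0::complex)))
        = (\<Sum>r<d. (if k mod d = r then 1 else 0) * (if l = i*d + r then 1 else 0))"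
    proof (intro sum.cong refl)
      fix r
      have "(k = i*d + r) = (k mod d = r)" using \<open>k = i*d + k mod d\<close> by linarith
      then show "(if k = i*d + r then 1 else 0) * (if l = i*d + r then 1 else (0::complex))
        = (if k mod d = r then 1 else 0) * (if l = i*d + r then 1 else 0)" by simp
    qed
    also have "\<dots> = (if l = i*d + k mod d then 1 else 0)"
      using sum_delta_l[where n=d and k="k mod d" and Q=True and f="\<lambda>r. (if l = i*d + r then 1 else 0)"] d0 by simp
    finally show ?thesis using True \<open>k = i*d + k mod d\<close> by auto
  next
    case False
    have "(if k = i*d + r then 1 else (0::complex)) = 0" if "r < d" for r
    proof -
      have "(i*d + r) div d = i" using that by simp
      then show ?thesis using False by auto
    qed
    then show ?thesis using False by simp
  qed
  also have "\<dots> = blockproj d m i $$ (k,l)" using k l by (simp add: blockproj_index)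
  finally show "(blkemb d m i * cadj (blkemb d m i)) $$ (k,l) = blockproj d m i $$ (k,l)" .
qed simp_all

lemma msum_proj: "msum (d*m) (d*m) (blockproj d m) m = 1\<^sub>m (d*m)"
proof -
  have c: "\<forall>i<m. blockproj d m i \<in> carrier_mat (d*m) (d*m)" by simp
  show ?thesis unfolding msum_eq[OF c]
  proof (rule eq_matI)
    fix k l assume "k < dim_row (1\<^sub>m (d*m))" "l < dim_col (1\<^sub>m (d*m))"
    then have k: "k < d*m" and l: "l < d*m" by simp_all
    have "(\<Sum>i<m. blockproj d m i $$ (k,l)) = (\<Sum>i<m. if k div d = i \<and> (if k = l then k div d else m) = i then 1 else 0)"
      using k l by (intro sum.cong refl) (auto simp: blockproj_index)
    also have "\<dots> = (if k = l then 1 else 0)"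
      using div_less_m[OF k] by (simp add: sum_delta_if)
    finally show "mat (d*m) (d*m) (\<lambda>(k,l). \<Sum>i<m. blockproj d m i $$ (k,l)) $$ (k,l) = 1\<^sub>m (d*m) $$ (k,l)"
      using k l by simp
  qed simp_all
qed

lemma msum_sandwich:
  assumes M: "M \<in> carrier_mat n n" and N: "N \<in> carrier_mat n n" and Q: "\<forall>i<m. Q i \<in> carrier_mat n n"
  shows "msum n n (\<lambda>i. M * Q i * N) m = M * msum n n Q m * N"
proof -
  have c: "\<forall>i<m. M * Q i * N \<in> carrier_mat n n"
  proof (intro allI impI)
    fix i assume "i < m"
    then have "Q i \<in> carrier_mat n n" using Q by blast
    then show "M * Q i * N \<in> carrier_mat n n" by (rule sq_mult[OF sq_mult[OF M] N])
  qed
  have S: "msum n n Q m \<in> carrier_mat n n" unfolding msum_eq[OF Q] by simp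
  have trip: "(M * Z * N) $$ (k,l) = (\<Sum>q<n. \<Sum>p<n. M$$(k,p) * Z$$(p,q) * N$$(q,l))"
    if Z: "Z \<in> carrier_mat n n" and k: "k < n" and l: "l < n" for Z k l
  proof -
    have "(M * Z * N) $$ (k,l) = (\<Sum>q<dim_col (M * Z). (M * Z) $$ (k,q) * N$$(q,l))"
      by (rule mult_index) (use M Z N k l in simp_all)
    also have "\<dots> = (\<Sum>q<n. (M * Z) $$ (k,q) * N$$(q,l))" using Z by simp
    also have "\<dots> = (\<Sum>q<n. \<Sum>p<n. M$$(k,p) * Z$$(p,q) * N$$(q,l))"
    proof (intro sum.cong refl)
      fix q assume q: "q \<in> {..<n}"
      have "(M * Z) $$ (k,q) = (\<Sum>p<dim_col M. M$$(k,p) * Z$$(p,q))"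
        by (rule mult_index) (use M Z k q in simp_all)
      then show "(M * Z) $$ (k,q) * N$$(q,l) = (\<Sum>p<n. M$$(k,p) * Z$$(p,q) * N$$(q,l))"
        using M by (simp add: sum_distrib_right)
    qed
    finally show ?thesis .
  qed
  show ?thesis unfolding msum_eq[OF c]
  proof (rule eq_matI)
    fix k l assume "k < dim_row (M * msum n n Q m * N)" "l < dim_col (M * msum n n Q m * N)"
    then have k: "k < n" and l: "l < n" using M N by simp_all
    have "(\<Sum>i<m. (M * Q i * N) $$ (k,l)) = (\<Sum>i<m. \<Sum>q<n. \<Sum>p<n. M$$(k,p) * Q i $$(p,q) * N$$(q,l))"
      using Q k l by (intro sum.cong refl) (simp add: trip)
    also have "\<dots> = (\<Sum>q<n. \<Sum>p<n. \<Sum>i<m. M$$(k,p) * Q i $$(p,q) * N$$(q,l))"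
      by (simp add: sum.swap[of _ "{..<m}"])
    also have "\<dots> = (\<Sum>q<n. \<Sum>p<n. M$$(k,p) * msum n n Q m $$(p,q) * N$$(q,l))"
      unfolding msum_eq[OF Q] by (intro sum.cong refl) (simp add: sum_distrib_left sum_distrib_right)
    also have "\<dots> = (M * msum n n Q m * N) $$ (k,l)" using trip[OF S k l] by simp
    finally show "mat n n (\<lambda>(k,l). \<Sum>i<m. (M * Q i * N) $$ (k,l)) $$ (k,l) = (M * msum n n Q m * N) $$ (k,l)"
      using k l by simp
  qed (use M N in simp_all)
qed

lemma smult_mult_cadj:
  assumes M: "M \<in> carrier_mat r p"
  shows "(c \<cdot>\<^sub>m M) * cadj (c \<cdot>\<^sub>m M) = (c * cnj c) \<cdot>\<^sub>m (M * cadj M)"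
proof (rule eq_matI)
  fix i j assume "i < dim_row ((c * cnj c) \<cdot>\<^sub>m (M * cadj M))" "j < dim_col ((c * cnj c) \<cdot>\<^sub>m (M * cadj M))"
  then have i: "i < r" and j: "j < r" using M by simp_all
  show "((c \<cdot>\<^sub>m M) * cadj (c \<cdot>\<^sub>m M)) $$ (i,j) = ((c * cnj c) \<cdot>\<^sub>m (M * cadj M)) $$ (i,j)"
    using M i j by (simp add: mult_index sum_distrib_left mult_ac)
qed (use M in simp_all)

lemma smult_smult_mat: "a \<cdot>\<^sub>m (b \<cdot>\<^sub>m (A::complex mat)) = (a * b) \<cdot>\<^sub>m A"
  by (rule eq_matI) auto
lemma one_smult_mat': "(1::complex) \<cdot>\<^sub>m A = A"
  by (rule eq_matI) auto

lemma part2: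
  assumes m0: "m > 0" and P: "psd_mat (d*m) A" and Uu: "unitary_mat (d*m) U" and Dp: "psd_mat d D"
    and pin: "pinching d m (cadj U * A * U) = (1 / of_nat m) \<cdot>\<^sub>m blockdiag d m (\<lambda>_. D)"
  shows "\<exists>X Us. (\<forall>i<m. X i \<in> carrier_mat (d*m) d \<and> unitary_mat (d*m) (Us i)) \<and>
             A = (1 / of_nat m) \<cdot>\<^sub>m msum (d*m) (d*m) (\<lambda>i. X i * cadj (X i)) m \<and>
             (\<forall>i<m. cadj (Us i) * X i * cadj (X i) * Us i
                       = blockdiag d m (\<lambda>j. if j = i then D else 0\<^sub>m d d) \<and>
                     ptrace d m (cadj (Us i) * X i * cadj (X i) * Us i)
                       = ptrace d m (cadj U * A * U))"
proof -
  let ?n = "d*m"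
  have Ac: "A \<in> carrier_mat ?n ?n" using P unfolding psd_mat_def by blast
  have Dc: "D \<in> carrier_mat d d" using Dp unfolding psd_mat_def by blast
  obtain W lam where Wu: "unitary_mat ?n W" and lam0: "\<forall>k<?n. lam k \<ge> (0::real)"
    and AW: "A = W * diagm ?n (\<lambda>k. complex_of_real (lam k)) * cadj W"
    using spectral_psd[OF P] by blast
  define L where "L = diagm ?n (\<lambda>k. complex_of_real (lam k))"
  have Lc: "L \<in> carrier_mat ?n ?n" unfolding L_def by simp
  note w = unitaryD[OF Wu]
  note u = unitaryD[OF Uu]
  define S where "S = diagm ?n (\<lambda>k. complex_of_real (sqrt (lam k)))"
  have Sc: "S \<in> carrier_mat ?n ?n" unfolding S_def by simp
  have cS: "cadj S = S" unfolding S_def by (rule eq_matI) auto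
  have SS: "S * S = L"
  proof (rule mat_eqI[of _ ?n ?n])
    fix i j assume i: "i < ?n" and j: "j < ?n"
    have "(S * S) $$ (i,j) = S$$(i,j) * complex_of_real (sqrt (lam j))"
      using mult_diagm_index[OF Sc i j] unfolding S_def by simp
    also have "\<dots> = L $$ (i,j)"
      using i j lam0 unfolding S_def L_def by (simp flip: of_real_mult)
    finally show "(S * S) $$ (i,j) = L $$ (i,j)" .
  qed (use Sc Lc in \<open>simp_all add: sq_mult[of _ ?n]\<close>)
  define RA where "RA = W * S * cadj W"
  have RAc: "RA \<in> carrier_mat ?n ?n" unfolding RA_def using w(1,4) Sc by (simp add: sq_mult[of _ ?n])
  have cRA: "cadj RA = RA"
    unfolding RA_def using w(1,4) Sc
    by (simp add: cadj_mult[of _ ?n ?n _ ?n] sq_mult[of _ ?n] cS sq_assoc[of _ ?n])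
  have RARA: "RA * RA = A"
  proof -
    have "RA * RA = W * S * (cadj W * W) * S * cadj W"
      unfolding RA_def using w(1,4) Sc by (simp add: sq_mult[of _ ?n] sq_assoc[of _ ?n])
    also have "\<dots> = W * (S * S) * cadj W" using w(1,2,4) Sc by (simp add: sq_mult[of _ ?n] sq_assoc[of _ ?n])
    finally show ?thesis unfolding SS AW L_def .
  qed
  define R where "R = cadj U * RA * U"
  have Rc: "R \<in> carrier_mat ?n ?n" unfolding R_def using u(1,4) RAc by (simp add: sq_mult[of _ ?n])
  have cR: "cadj R = R"
    unfolding R_def using u(1,4) RAc
    by (simp add: cadj_mult[of _ ?n ?n _ ?n] sq_mult[of _ ?n] cRA sq_assoc[of _ ?n])
  define B where "B = cadj U * A * U"
  have Bc: "B \<in> carrier_mat ?n ?n" unfolding B_def using u(1,4) Ac by (simp add: sq_mult[of _ ?n])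
  have RR: "R * R = B"
  proof -
    have "R * R = cadj U * RA * (U * cadj U) * RA * U"
      unfolding R_def using u(1,4) RAc by (simp add: sq_mult[of _ ?n] sq_assoc[of _ ?n])
    also have "\<dots> = cadj U * (RA * RA) * U" using u(1,3,4) RAc by (simp add: sq_mult[of _ ?n] sq_assoc[of _ ?n])
    finally show ?thesis unfolding RARA B_def .
  qed
  have Bent: "B $$ (k,l) = D $$ (k mod d, l mod d) / of_nat m"
    if k: "k < ?n" and l: "l < ?n" and kl: "k div d = l div d" for k l
  proof -
    have "pinching d m B $$ (k,l) = ((1 / of_nat m) \<cdot>\<^sub>m blockdiag d m (\<lambda>_. D)) $$ (k,l)"
      using pin unfolding B_def by simp
    then show ?thesis unfolding pinching_eq[OF Bc] using k l kl by (simp add: blockdiag_index)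
  qed
  define Pr where "Pr i = blockproj d m i" for i
  have Prc: "Pr i \<in> carrier_mat ?n ?n" for i unfolding Pr_def by simp
  define Y where "Y i = U * R * Pr i" for i
  have Yc: "Y i \<in> carrier_mat ?n ?n" for i unfolding Y_def using u(1) Rc Prc by (simp add: sq_mult[of _ ?n])
  have cY: "cadj (Y i) = Pr i * R * cadj U" for i
    unfolding Y_def using u(1,4) Rc Prc
    by (simp add: cadj_mult[of _ ?n ?n _ ?n] sq_mult[of _ ?n] cR Pr_def blockproj_cadj sq_assoc[of _ ?n])
  define X where "X i = complex_of_real (sqrt (real m)) \<cdot>\<^sub>m (Y i * blkemb d m i)" for i
  have Xc: "X i \<in> carrier_mat ?n d" for i
    unfolding X_def using Yc[of i] by (simp add: mult_carrier_mat[OF _ blkemb_carrier])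
  have cc: "complex_of_real (sqrt (real m)) * cnj (complex_of_real (sqrt (real m))) = of_nat m"
    by (simp flip: of_real_mult)
  have YEc: "Y i * blkemb d m i \<in> carrier_mat ?n d" for i using Yc[of i] by (simp add: mult_carrier_mat[OF _ blkemb_carrier])
  have YY: "Y i * cadj (Y i) = U * R * Pr i * R * cadj U" for i
  proof -
    have "Y i * cadj (Y i) = U * R * (Pr i * Pr i) * R * cadj U"
      unfolding cY unfolding Y_def using u(1,4) Rc Prc by (simp add: sq_mult[of _ ?n] sq_assoc[of _ ?n])
    then show ?thesis unfolding Pr_def blockproj_idem .
  qed
  have XX: "X i * cadj (X i) = of_nat m \<cdot>\<^sub>m (Y i * cadj (Y i))" for i
  proof -
    have "X i * cadj (X i) = of_nat m \<cdot>\<^sub>m ((Y i * blkemb d m i) * cadj (Y i * blkemb d m i))"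
      unfolding X_def smult_mult_cadj[OF YEc] cc ..
    also have "(Y i * blkemb d m i) * cadj (Y i * blkemb d m i) = Y i * (blkemb d m i * cadj (blkemb d m i)) * cadj (Y i)"
    proof -
      let ?E = "blkemb d m i"
      have E: "?E \<in> carrier_mat ?n d" by simp
      have E': "cadj ?E \<in> carrier_mat d ?n" by (rule cadj_carrier2[OF E])
      have Y': "cadj (Y i) \<in> carrier_mat ?n ?n" by (rule sq_cadj[OF Yc])
      have "(Y i * ?E) * cadj (Y i * ?E) = (Y i * ?E) * (cadj ?E * cadj (Y i))"
        by (simp add: cadj_mult[OF Yc E])
      also have "\<dots> = Y i * (?E * (cadj ?E * cadj (Y i)))"
        by (rule assoc_mult_mat[OF Yc E mult_carrier_mat[OF E' Y']])
      also have "?E * (cadj ?E * cadj (Y i)) = (?E * cadj ?E) * cadj (Y i)"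
        by (rule assoc_mult_mat[OF E E' Y', symmetric])
      also have "Y i * (?E * cadj ?E * cadj (Y i)) = Y i * (?E * cadj ?E) * cadj (Y i)"
        by (rule assoc_mult_mat[OF Yc mult_carrier_mat[OF E E'] Y', symmetric])
      finally show ?thesis .
    qed
    also have "\<dots> = Y i * Pr i * cadj (Y i)" unfolding blkemb_proj Pr_def ..
    also have "\<dots> = Y i * cadj (Y i)"
    proof -
      have "Y i * Pr i = Y i" unfolding Y_def using u(1) Rc Prc
        by (simp add: sq_mult[of _ ?n] sq_assoc[of _ ?n] Pr_def blockproj_idem)
      then show ?thesis by simp
    qed
    finally show ?thesis .
  qed
  define Mm where "Mm = of_nat m \<cdot>\<^sub>m (U * R)"
  define N where "N = R * cadj U"
  have Mmc: "Mm \<in> carrier_mat ?n ?n" unfolding Mm_def using u(1) Rc by (simp add: sq_mult[of _ ?n])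
  have Nc: "N \<in> carrier_mat ?n ?n" unfolding N_def using u(4) Rc by (simp add: sq_mult[of _ ?n])
  have XX2: "X i * cadj (X i) = Mm * Pr i * N" for i
  proof -
    have "Mm * Pr i * N = of_nat m \<cdot>\<^sub>m (U * R * Pr i * (R * cadj U))"
    proof -
      have UR: "U * R \<in> carrier_mat ?n ?n" by (rule sq_mult[OF u(1) Rc])
      have URP: "U * R * Pr i \<in> carrier_mat ?n ?n" by (rule sq_mult[OF UR Prc])
      have N': "R * cadj U \<in> carrier_mat ?n ?n" by (rule sq_mult[OF Rc u(4)])
      have "Mm * Pr i = of_nat m \<cdot>\<^sub>m (U * R * Pr i)" unfolding Mm_def by (rule mult_smult_assoc_mat[OF UR Prc])
      then have "Mm * Pr i * N = (of_nat m \<cdot>\<^sub>m (U * R * Pr i)) * (R * cadj U)" unfolding N_def by simp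
      also have "\<dots> = of_nat m \<cdot>\<^sub>m (U * R * Pr i * (R * cadj U))" by (rule mult_smult_assoc_mat[OF URP N'])
      finally show ?thesis .
    qed
    also have "U * R * Pr i * (R * cadj U) = U * R * Pr i * R * cadj U"
      using u(1,4) Rc Prc by (simp add: sq_mult[of _ ?n] sq_assoc[of _ ?n])
    finally show ?thesis unfolding XX YY by simp
  qed
  have Asum: "A = (1 / of_nat m) \<cdot>\<^sub>m msum ?n ?n (\<lambda>i. X i * cadj (X i)) m"
  proof -
    have "msum ?n ?n (\<lambda>i. X i * cadj (X i)) m = msum ?n ?n (\<lambda>i. Mm * Pr i * N) m"
      unfolding XX2 ..
    also have "\<dots> = Mm * msum ?n ?n Pr m * N"
      by (rule msum_sandwich[OF Mmc Nc]) (simp add: Prc)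
    also have "msum ?n ?n Pr m = 1\<^sub>m ?n" unfolding Pr_def by (rule msum_proj)
    also have "Mm * 1\<^sub>m ?n * N = of_nat m \<cdot>\<^sub>m (U * (R * R) * cadj U)"
    proof -
      have UR: "U * R \<in> carrier_mat ?n ?n" by (rule sq_mult[OF u(1) Rc])
      have N': "R * cadj U \<in> carrier_mat ?n ?n" by (rule sq_mult[OF Rc u(4)])
      have "Mm * 1\<^sub>m ?n * N = Mm * N" using Mmc by simp
      also have "\<dots> = of_nat m \<cdot>\<^sub>m (U * R * (R * cadj U))" unfolding Mm_def N_def by (rule mult_smult_assoc_mat[OF UR N'])
      also have "U * R * (R * cadj U) = U * (R * R) * cadj U"
        using u(1,4) Rc by (simp add: sq_mult[of _ ?n] sq_assoc[of _ ?n])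
      finally show ?thesis .
    qed
    also have "U * (R * R) * cadj U = A"
    proof -
      have "U * (R * R) * cadj U = (U * cadj U) * A * (U * cadj U)"
        unfolding RR B_def using u(1,4) Ac by (simp add: sq_mult[of _ ?n] sq_assoc[of _ ?n])
      then show ?thesis using u(3) Ac by simp
    qed
    finally have "msum ?n ?n (\<lambda>i. X i * cadj (X i)) m = of_nat m \<cdot>\<^sub>m A" .
    then show ?thesis using m0 by (simp add: smult_smult_mat one_smult_mat')
  qed
  have "\<forall>i. \<exists>V. unitary_mat ?n V \<and> cadj V * (Y i * cadj (Y i)) * V = cadj (Y i) * Y i"
    using polar_sim[OF Yc] by blast
  then obtain Vs where Vs: "\<And>i. unitary_mat ?n (Vs i)" "\<And>i. cadj (Vs i) * (Y i * cadj (Y i)) * Vs i = cadj (Y i) * Y i"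
    by metis
  have conj_eq: "cadj (Vs i) * X i * cadj (X i) * Vs i = blockdiag d m (\<lambda>j. if j = i then D else 0\<^sub>m d d)" for i
  proof -
    note v = unitaryD[OF Vs(1)[of i]]
    have YYc: "Y i * cadj (Y i) \<in> carrier_mat ?n ?n" using Yc by (simp add: sq_mult[of _ ?n] sq_cadj)
    have "cadj (Vs i) * X i * cadj (X i) * Vs i = cadj (Vs i) * (X i * cadj (X i)) * Vs i"
      using v(1,4) Xc[of i] by (simp add: assoc_mult_mat[of _ ?n ?n _ d _ ?n] mult_carrier_mat[OF _ Xc] cadj_carrier2[OF Xc])
    also have "\<dots> = of_nat m \<cdot>\<^sub>m (cadj (Vs i) * (Y i * cadj (Y i)) * Vs i)"
      unfolding XX using v(1,4) YYc
      by (simp add: mult_smult_distrib[of _ ?n ?n] mult_smult_assoc_mat[of _ ?n ?n] sq_mult[of _ ?n])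
    also have "\<dots> = of_nat m \<cdot>\<^sub>m (cadj (Y i) * Y i)" unfolding Vs(2) ..
    also have "cadj (Y i) * Y i = Pr i * B * Pr i"
    proof -
      have "cadj (Y i) * Y i = Pr i * R * (cadj U * U) * R * Pr i"
        unfolding cY unfolding Y_def using u(1,4) Rc Prc by (simp add: sq_mult[of _ ?n] sq_assoc[of _ ?n])
      also have "\<dots> = Pr i * (R * R) * Pr i" using u(2) Rc Prc by (simp add: sq_mult[of _ ?n] sq_assoc[of _ ?n])
      finally show ?thesis unfolding RR .
    qed
    also have "of_nat m \<cdot>\<^sub>m (Pr i * B * Pr i) = blockdiag d m (\<lambda>j. if j = i then D else 0\<^sub>m d d)"
    proof (rule eq_matI)
      fix k l assume "k < dim_row (blockdiag d m (\<lambda>j. if j = i then D else 0\<^sub>m d d))"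
        "l < dim_col (blockdiag d m (\<lambda>j. if j = i then D else 0\<^sub>m d d))"
      then have k: "k < ?n" and l: "l < ?n" by simp_all
      have d0: "d > 0" using k by (cases "d = 0") simp_all
      have km: "k mod d < d" "l mod d < d" using d0 by simp_all
      show "(of_nat m \<cdot>\<^sub>m (Pr i * B * Pr i)) $$ (k,l) = blockdiag d m (\<lambda>j. if j = i then D else 0\<^sub>m d d) $$ (k,l)"
        using k l km m0 unfolding Pr_def
        by (auto simp: proj_mult_index[OF Bc k l] blockdiag_index Bent)
    qed (simp_all add: Pr_def)
    finally show ?thesis .
  qed
  have pt1: "ptrace d m (blockdiag d m (\<lambda>j. if j = i then D else 0\<^sub>m d d)) = D" if i: "i < m" for i
  proof -
    let ?C = "blockdiag d m (\<lambda>j. if j = i then D else 0\<^sub>m d d)"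
    have c: "\<forall>j<m. blk d ?C j j \<in> carrier_mat d d" unfolding blk_def by simp
    show ?thesis unfolding ptrace_def msum_eq[OF c]
    proof (rule eq_matI)
      fix k l assume "k < dim_row D" "l < dim_col D"
      then have k: "k < d" and l: "l < d" using Dc by simp_all
      have "(\<Sum>j<m. blk d ?C j j $$ (k,l)) = (\<Sum>j<m. if j = i then D $$ (k,l) else 0)"
      proof (intro sum.cong refl)
        fix j assume j: "j \<in> {..<m}"
        have "j*d + k < ?n" "j*d + l < ?n" using idx_bound j k l by auto
        then show "blk d ?C j j $$ (k,l) = (if j = i then D $$ (k,l) else 0)"
          unfolding blk_def using k l by (simp add: blockdiag_index)
      qed
      also have "\<dots> = D $$ (k,l)" using i by simp
      finally show "mat d d (\<lambda>(k,l). \<Sum>j<m. blk d ?C j j $$ (k,l)) $$ (k,l) = D $$ (k,l)"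
        using k l by simp
    qed (use Dc in simp_all)
  qed
  have pt2: "ptrace d m B = D"
  proof -
    have c: "\<forall>j<m. blk d B j j \<in> carrier_mat d d" unfolding blk_def by simp
    show ?thesis unfolding ptrace_def msum_eq[OF c]
    proof (rule eq_matI)
      fix k l assume "k < dim_row D" "l < dim_col D"
      then have k: "k < d" and l: "l < d" using Dc by simp_all
      have "(\<Sum>j<m. blk d B j j $$ (k,l)) = (\<Sum>j<m. D $$ (k,l) / of_nat m)"
      proof (intro sum.cong refl)
        fix j assume j: "j \<in> {..<m}"
        have b: "j*d + k < ?n" "j*d + l < ?n" using idx_bound j k l by auto
        have "blk d B j j $$ (k,l) = B $$ (j*d + k, j*d + l)" unfolding blk_def using k l by simp
        also have "\<dots> = D $$ (k,l) / of_nat m" using Bent[OF b] k l by simp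
        finally show "blk d B j j $$ (k,l) = D $$ (k,l) / of_nat m" .
      qed
      also have "\<dots> = D $$ (k,l)" using m0 by simp
      finally show "mat d d (\<lambda>(k,l). \<Sum>j<m. blk d B j j $$ (k,l)) $$ (k,l) = D $$ (k,l)"
        using k l by simp
    qed (use Dc in simp_all)
  qed
  have "\<forall>i<m. X i \<in> carrier_mat ?n d \<and> unitary_mat ?n (Vs i)" using Xc Vs(1) by blast
  moreover have "\<forall>i<m. cadj (Vs i) * X i * cadj (X i) * Vs i = blockdiag d m (\<lambda>j. if j = i then D else 0\<^sub>m d d) \<and>
       ptrace d m (cadj (Vs i) * X i * cadj (X i) * Vs i) = ptrace d m (cadj U * A * U)"
    using conj_eq pt1 pt2 unfolding B_def by simp
  ultimately show ?thesis using Asum by blast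
qed


theorem proposition4p9:
  fixes d m :: nat and A :: "complex mat"
  assumes "m > 0"
    and "A \<in> carrier_mat (d*m) (d*m)"
    and "psd_mat (d*m) A"
  shows "(\<exists>U D. unitary_mat (d*m) U \<and> psd_mat d D \<and>
            pinching d m (cadj U * A * U) = (1 / of_nat m) \<cdot>\<^sub>m blockdiag d m (\<lambda>_. D))
     \<and> (\<forall>U D. unitary_mat (d*m) U \<and> psd_mat d D \<and>
            pinching d m (cadj U * A * U) = (1 / of_nat m) \<cdot>\<^sub>m blockdiag d m (\<lambda>_. D) \<longrightarrow>
          (\<exists>X Us. (\<forall>i<m. X i \<in> carrier_mat (d*m) d \<and> unitary_mat (d*m) (Us i)) \<and>
             A = (1 / of_nat m) \<cdot>\<^sub>m msum (d*m) (d*m) (\<lambda>i. X i * cadj (X i)) m \<and>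
             (\<forall>i<m. cadj (Us i) * X i * cadj (X i) * Us i
                       = blockdiag d m (\<lambda>j. if j = i then D else 0\<^sub>m d d) \<and>
                     ptrace d m (cadj (Us i) * X i * cadj (X i) * Us i)
                       = ptrace d m (cadj U * A * U))))"
  using part1[OF assms(1) assms(3)] part2[OF assms(1) assms(3)] by blast

end
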